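(* Let $(\tau,y'_1,\dots,y'_\tau)\in\mathcal{G}_{\zeta,C_1}$ and $2\le\ell\le\tau$ with $|y'_\ell-y'_{\ell-1}|\le A_n\sqrt n$. If $x\in G_\ell$ and $\varepsilon_n n\le n_3\le n$, then $$p_{n_3}(x',y'_\ell)=(1+o(1))\,p_{n_3}(u',y'_\ell)\quad\text{for all }x'\in\mathbf{K}+xN\text{ and all }u'\in\mathbb{T}_N+xN,$$ with the $o(1)$ term (as $N\to\infty$) uniform in $x'$ and $u'$.
   Context: Setup: $d\ge3$. $(Y_t)$ lazy simple random walk on $\mathbb{Z}^d$ (stays put w.p. $1/2$, otherwise moves to each neighbour w.p. $1/(4d)$), $p_t(x,y)=\mathbf{P}_x[Y_t=y]$, $|\cdot|$ Euclidean norm. $\mathbb{T}_N=[-N/2,N/2)^d\cap\mathbb{Z}^d$, $\varphi$ reduction mod $N$, $\tau_{\mathbf{x}}(\mathbf{y})=\varphi(\mathbf{y}+\mathbf{x})$; for $\mathbf{A}\subset\mathbb{T}_N$, $\mathbf{A}+xN=\{\mathbf{a}+xN:\mathbf{a}\in\mathbf{A}\}$. $L=mN$, $L^2/N^d\to A\in(0,\infty)$. Fix $2<\delta<d$ with $2\delta>d^2/(d-1)$, $n=\lfloor N^\delta\rfloor$, $0<\zeta<\delta/d$ with $\zeta(d-2)>d-\delta$. Fix $R$, $g$ with $g(N)\to\infty$, $K\subset B_R(o)$, $\mathbf{x}$ with $\tau_{\mathbf{x}}\varphi(B_R(o))\cap\varphi(B_{g(N)}(o))=\emptyset$; $\mathbf{K}=\tau_{\mathbf{x}}\varphi(K)$,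 $\mathbf{x}_0\in\mathbf{K}$; $B(\mathbf{x}_0,r)=\varphi(\{y:|y-\mathbf{x}_0|<r\})$. $f(n)=C_1\sqrt{\log N}$ for a constant $C_1>0$. $\mathcal{G}_{\zeta,C_1}$: tuples $(\tau,y'_1,\dots,y'_\tau)$ with $y'_0:=o$, (a) $(\sqrt{\log\log n})^{-1}N^d/n\le\tau\le(\log N)N^d/n$; (b) $y'_\ell\in(-L,L)^d$ for $1\le\ell<\tau$, $y'_\tau\notin(-L,L)^d$; (c) $\varphi(y'_\ell)\notin B(\mathbf{x}_0,N^\zeta)$ for $1\le\ell\le\tau$; (d) $|y'_\ell-y'_{\ell-1}|\le f(n)\sqrt n$ for $1\le\ell\le\tau$. Further: $A_n=10\log\log n$, $\varepsilon_n=(10\log\log n)^{-1}$, and $G_\ell=\{x\in\mathbb{Z}^d:|y'_{\ell-1}-xN|\le A_n^2\sqrt n,\ |xN-y'_\ell|\le A_n^2\sqrt n\}$. *)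

theory Defs
  imports "HOL-Analysis.Analysis"
begin

text \<open>Points of Z^d are int vectors indexed by a finite type 'd, with d = CARD('d).\<close>

definition rv :: "int^'d \<Rightarrow> real^'d" where
  "rv x = (\<chi> i. real_of_int (x $ i))"

definition znorm :: "int^'d \<Rightarrow> real" where
  "znorm x = norm (rv x)"

definition unitv :: "'d \<Rightarrow> int^'d" where
  "unitv k = (\<chi> i. if i = k then 1 else 0)"

text \<open>Lazy simple random walk: p_t(x,y) = P_x[Y_t = y], via the Markov recursion
  p_{t+1}(x,y) = sum_z P(x,z) p_t(z,y).\<close>
fun lazy_p :: "nat \<Rightarrow> int^'d \<Rightarrow> int^'d \<Rightarrow> real" where
  "lazy_p 0 x y = (if x = y then 1 else 0)"
| "lazy_p (Suc t) x y = lazy_p t x y / 2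
     + (\<Sum>i\<in>UNIV. lazy_p t (x + unitv i) y + lazy_p t (x - unitv i) y) / (4 * real CARD('d))"

definition torus :: "nat \<Rightarrow> (int^'d) set" where
  "torus N = {y. \<forall>i. - real N / 2 \<le> real_of_int (y $ i) \<and> real_of_int (y $ i) < real N / 2}"

definition phi :: "nat \<Rightarrow> int^'d \<Rightarrow> int^'d" where
  "phi N y = (\<chi> i. (y $ i + int (N div 2)) mod int N - int (N div 2))"

definition tshift :: "nat \<Rightarrow> int^'d \<Rightarrow> int^'d \<Rightarrow> int^'d" where
  "tshift N xx y = phi N (y + xx)"

definition zball :: "int^'d \<Rightarrow> real \<Rightarrow> (int^'d) set" where
  "zball c r = {y. znorm (y - c) < r}"

definition tball :: "nat \<Rightarrow> int^'d \<Rightarrow> real \<Rightarrow> (int^'d) set" where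
  "tball N x0 r = phi N ` zball x0 r"

definition shiftset :: "(int^'d) set \<Rightarrow> int^'d \<Rightarrow> nat \<Rightarrow> (int^'d) set" where
  "shiftset S x N = (\<lambda>a. a + int N *s x) ` S"

definition nN :: "real \<Rightarrow> nat \<Rightarrow> nat" where
  "nN \<delta> N = nat \<lfloor>real N powr \<delta>\<rfloor>"

definition An :: "nat \<Rightarrow> real" where
  "An n = 10 * ln (ln (real n))"

definition epsn :: "nat \<Rightarrow> real" where
  "epsn n = 1 / (10 * ln (ln (real n)))"

definition fN :: "real \<Rightarrow> nat \<Rightarrow> real" where
  "fN C1 N = C1 * sqrt (ln (real N))"

definition openbox :: "int \<Rightarrow> (int^'d) set" where
  "openbox L = {y. \<forall>i. \<bar>y $ i\<bar> < L}"

text \<open>The set G_{zeta,C1}: tuples (tau, y'_1..y'_tau), encoded as (tau, ys) with ys 0 = o.\<close>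
definition goodG :: "nat \<Rightarrow> nat \<Rightarrow> real \<Rightarrow> real \<Rightarrow> real \<Rightarrow> int^'d \<Rightarrow> (nat \<times> (nat \<Rightarrow> int^'d)) set" where
  "goodG N L \<delta> \<zeta> C1 x0 = {(\<tau>, ys). ys 0 = 0 \<and>
     (let n = nN \<delta> N in
       real N ^ CARD('d) / (sqrt (ln (ln (real n))) * real n) \<le> real \<tau> \<and>
       real \<tau> \<le> ln (real N) * real N ^ CARD('d) / real n \<and>
       (\<forall>l\<in>{1..<\<tau>}. ys l \<in> openbox (int L)) \<and> ys \<tau> \<notin> openbox (int L) \<and>
       (\<forall>l\<in>{1..\<tau>}. phi N (ys l) \<notin> tball N x0 (real N powr \<zeta>)) \<and>
       (\<forall>l\<in>{1..\<tau>}. znorm (ys l - ys (l - 1)) \<le> fN C1 N * sqrt (real n)))}"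

definition Gl :: "nat \<Rightarrow> nat \<Rightarrow> (nat \<Rightarrow> int^'d) \<Rightarrow> nat \<Rightarrow> (int^'d) set" where
  "Gl N n ys l = {x. znorm (ys (l - 1) - int N *s x) \<le> (An n)^2 * sqrt (real n) \<and>
                    znorm (int N *s x - ys l) \<le> (An n)^2 * sqrt (real n)}"

end

theory Submission
  imports Defs "HOL-Analysis.Harmonic_Numbers" "HOL-Real_Asymp.Real_Asymp"
begin


fun Wt :: "real \<Rightarrow> nat \<Rightarrow> nat \<Rightarrow> real" where
  "Wt q 0 k = (if k = 0 then 1 else 0)"
| "Wt q (Suc t) k = (1-q) * Wt q t k + (if k = 0 then 0 else q * Wt q t (k-1))"

lemma Wt_zero: "t < k \<Longrightarrow> Wt q t k = 0"
  by (induction t arbitrary: k) auto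

lemma Wt_nonneg: "0 \<le> q \<Longrightarrow> q \<le> 1 \<Longrightarrow> 0 \<le> Wt q t k"
  by (induction t arbitrary: k) auto

lemma Wt_shift:
  "(\<Sum>k\<le>Suc t. Wt q (Suc t) k * f k) = (1-q) * (\<Sum>k\<le>t. Wt q t k * f k) + q * (\<Sum>k\<le>t. Wt q t k * f (Suc k))"
proof -
  have "(\<Sum>k\<le>Suc t. Wt q (Suc t) k * f k) = (\<Sum>k\<le>Suc t. (1-q) * Wt q t k * f k) + (\<Sum>k\<le>Suc t. (if k = 0 then 0 else q * Wt q t (k-1)) * f k)"
    by (subst sum.distrib[symmetric]) (simp add: distrib_right del: sum.atMost_Suc)
  also have "(\<Sum>k\<le>Suc t. (1-q) * Wt q t k * f k) = (1-q) * (\<Sum>k\<le>t. Wt q t k * f k)"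
    by (simp add: Wt_zero sum_distrib_left mult.assoc)
  also have "(\<Sum>k\<le>Suc t. (if k = 0 then 0 else q * Wt q t (k-1)) * f k) = q * (\<Sum>k\<le>t. Wt q t k * f (Suc k))"
    by (subst sum.atMost_Suc_shift) (simp add: sum_distrib_left mult.assoc)
  finally show ?thesis .
qed

lemma Wt_gen: "(\<Sum>k\<le>t. Wt q t k * (a^k * b^(t-k))) = ((1-q)*b + q*a)^t"
proof (induction t)
  case 0 then show ?case by simp
next
  case (Suc t)
  have "(\<Sum>k\<le>Suc t. Wt q (Suc t) k * (a^k * b^(Suc t-k))) =
     (1-q) * (\<Sum>k\<le>t. Wt q t k * (a^k * b^(Suc t - k))) + q * (\<Sum>k\<le>t. Wt q t k * (a^Suc k * b^(Suc t - Suc k)))"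
    by (rule Wt_shift)
  also have "(\<Sum>k\<le>t. Wt q t k * (a^k * b^(Suc t - k))) = b * (\<Sum>k\<le>t. Wt q t k * (a^k * b^(t - k)))"
    by (auto simp: sum_distrib_left Suc_diff_le intro!: sum.cong)
  also have "(\<Sum>k\<le>t. Wt q t k * (a^Suc k * b^(Suc t - Suc k))) = a * (\<Sum>k\<le>t. Wt q t k * (a^k * b^(t - k)))"
    by (auto simp: sum_distrib_left intro!: sum.cong)
  finally show ?case using Suc by (simp add: algebra_simps)
qed

lemma Wt_sum1: "(\<Sum>k\<le>t. Wt q t k) = 1"
  using Wt_gen[of q t 1 1] by simp

definition bb :: "nat \<Rightarrow> int \<Rightarrow> real" where
  "bb k z = (if z < - int k then 0 else real ((2*k) choose nat (int k + z))) / 4^k"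

lemma bb_nonneg: "0 \<le> bb k z"
  by (simp add: bb_def)

lemma bb_le1: "bb k z \<le> 1"
proof -
  have "real ((2*k) choose nat (int k + z)) \<le> 2^(2*k)"
    using binomial_le_pow2[of "2*k" "nat (int k + z)"] by (metis of_nat_le_iff of_nat_numeral of_nat_power)
  also have "(2::real)^(2*k) = 4^k" by (simp add: power_mult)
  finally show ?thesis by (simp add: bb_def)
qed

lemma binom_pascal2: "(Suc (Suc n) choose Suc m) = (if m = 0 then 0 else n choose (m - 1)) + 2 * (n choose m) + (n choose Suc m)"
  by (cases m) auto

lemma bb_rec: "bb (Suc k) z = bb k z / 2 + (bb k (z+1) + bb k (z-1)) / 4"
proof -
  consider "z < - int k - 1" | "z = - int k - 1" | "z \<ge> - int k" by linarith
  then show ?thesis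
  proof cases
    case 1 then show ?thesis by (simp add: bb_def)
  next
    case 2 then show ?thesis by (simp add: bb_def)
  next
    case 3
    define m where "m = nat (int k + z)"
    have zm: "int k + z = int m" using 3 by (simp add: m_def)
    have e1: "nat (int (Suc k) + z) = Suc m" using zm by simp
    have e2: "nat (int k + (z+1)) = Suc m" using zm by simp
    have e3: "m \<ge> 1 \<Longrightarrow> nat (int k + (z-1)) = m - 1" using zm by simp
    have A: "real (2 * Suc k choose Suc m) = (if m = 0 then 0 else real (2*k choose (m - 1))) + 2 * real (2*k choose m) + real (2*k choose Suc m)"
      using binom_pascal2[of "2*k" m] by simp
    show ?thesis
    proof (cases "m = 0")
      case True
      then have "z = - int k" using zm by simp
      then show ?thesis using A True e1 e2 zm
        by (simp add: bb_def m_def field_simps)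
    next
      case False
      then have "\<not> (z - 1 < - int k)" using zm by simp
      then show ?thesis using A False e1 e2 e3 zm 3
        by (simp add: bb_def m_def field_simps)
    qed
  qed
qed



fun PW :: "'d set \<Rightarrow> nat \<Rightarrow> int^'d \<Rightarrow> real" where
  "PW I 0 z = (if (\<forall>j\<in>I. z$j = 0) then 1 else 0)"
| "PW I (Suc t) z = (if I = {} then PW I t z else
     PW I t z / 2 + (\<Sum>j\<in>I. PW I t (z + unitv j) + PW I t (z - unitv j)) / (4 * real (card I)))"

lemma PW_empty: "PW {} t z = 1"
  by (induction t) auto

lemma PW_nonneg: "0 \<le> PW I t z"
  by (induction t arbitrary: z) (auto intro!: sum_nonneg add_nonneg_nonneg divide_nonneg_nonneg)

lemma PW_le1: "PW I t z \<le> 1"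
proof (induction t arbitrary: z)
  case 0 then show ?case by simp
next
  case (Suc t)
  show ?case
  proof (cases "I = {}")
    case True then show ?thesis using Suc by simp
  next
    case False
    have cI: "card I > 0" using False by (simp add: card_gt_0_iff)
    have "(\<Sum>j\<in>I. PW I t (z + unitv j) + PW I t (z - unitv j)) \<le> (\<Sum>j\<in>I. 2)"
      by (intro sum_mono) (smt (verit) Suc)
    also have "\<dots> = 2 * real (card I)" by simp
    finally have "(\<Sum>j\<in>I. PW I t (z + unitv j) + PW I t (z - unitv j)) / (4 * real (card I)) \<le> 1/2"
      using cI by (simp add: divide_simps)
    then show ?thesis using False Suc[of z] by simp
  qed
qed

lemma unitv_nth: "unitv i $ j = (if j = i then 1 else 0)"
  by (simp add: unitv_def)

lemma PW_cong: "(\<forall>j\<in>I. z$j = w$j) \<Longrightarrow> PW I t z = PW I t w"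
proof (induction t arbitrary: z w)
  case 0 then show ?case by simp
next
  case (Suc t)
  have "PW I t z = PW I t w" using Suc by blast
  moreover have "\<And>j. PW I t (z + unitv j) = PW I t (w + unitv j)" "\<And>j. PW I t (z - unitv j) = PW I t (w - unitv j)"
    using Suc.prems by (auto intro!: Suc.IH)
  ultimately show ?case by (simp add: PW_empty)
qed

lemma lazy_PW: "lazy_p t x y = PW (UNIV::'d::finite set) t (x - y)"
proof (induction t arbitrary: x)
  case 0 then show ?case by (auto simp: vec_eq_iff)
next
  case (Suc t)
  have e1: "\<And>i. x + unitv i - y = (x - y) + unitv i" "\<And>i. x - unitv i - y = (x - y) - unitv i"
    by (simp_all add: algebra_simps)
  show ?case using Suc by (simp add: e1)
qed

lemma PW_stepJ:
  fixes J :: "'d::finite set"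
  assumes "c = real (card J) + 1"
  shows "(1 - 1/c) * PW J (Suc s) w = (1 - 1/c) * (PW J s w / 2) + (\<Sum>j\<in>J. PW J s (w + unitv j) + PW J s (w - unitv j)) / (4 * c)"
proof (cases "J = {}")
  case True then show ?thesis using assms by simp
next
  case False
  have cJ: "card J > 0" using False by (simp add: card_gt_0_iff)
  define S where "S = (\<Sum>j\<in>J. PW J s (w + unitv j) + PW J s (w - unitv j))"
  have "1 - 1/c = real (card J) / c" using assms by (simp add: field_simps)
  then have "(1-1/c) * PW J (Suc s) w = (real (card J) / c) * (PW J s w / 2 + S / (4 * real (card J)))"
    using False by (simp add: S_def)
  also have "\<dots> = (real (card J) / c) * (PW J s w / 2) + (real (card J) / c) * (S / (4 * real (card J)))"
    by (simp add: distrib_left)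
  also have "(real (card J) / c) * (S / (4 * real (card J))) = S / (4 * c)"
    using cJ False by simp
  finally show ?thesis using \<open>1 - 1/c = real (card J) / c\<close> by (simp add: S_def)
qed

lemma PW_rep:
  fixes J :: "'d::finite set"
  assumes iJ: "i \<notin> J"
  shows "PW (insert i J) t z = (\<Sum>k\<le>t. Wt (1/(real (card J) + 1)) t k * (bb k (z$i) * PW J (t-k) z))"
proof (induction t arbitrary: z)
  case 0
  have "bb 0 (z$i) = (if z$i = 0 then 1 else 0)" by (simp add: bb_def)
  then show ?case by auto
next
  case (Suc t)
  define c where "c = real (card J) + 1"
  define q where "q = 1/c"
  have c1: "c \<ge> 1" by (simp add: c_def)
  have cI: "real (card (insert i J)) = c" using iJ by (simp add: c_def)
  define F where "F = (\<lambda>w. \<Sum>k\<le>t. Wt q t k * (bb k (w$i) * PW J (t-k) w))"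
  have IH: "\<And>w. PW (insert i J) t w = F w" using Suc by (simp add: F_def q_def c_def)
  have Fi1: "F (z + unitv i) = (\<Sum>k\<le>t. Wt q t k * (bb k (z$i + 1) * PW J (t-k) z))"
    unfolding F_def using iJ by (intro sum.cong refl) (auto simp: unitv_nth intro!: PW_cong)
  have Fi2: "F (z - unitv i) = (\<Sum>k\<le>t. Wt q t k * (bb k (z$i - 1) * PW J (t-k) z))"
    unfolding F_def using iJ by (intro sum.cong refl) (auto simp: unitv_nth intro!: PW_cong)
  have Fj1: "\<And>j. j \<in> J \<Longrightarrow> F (z + unitv j) = (\<Sum>k\<le>t. Wt q t k * (bb k (z$i) * PW J (t-k) (z + unitv j)))"
    unfolding F_def using iJ by (intro sum.cong refl) (auto simp: unitv_nth)
  have Fj2: "\<And>j. j \<in> J \<Longrightarrow> F (z - unitv j) = (\<Sum>k\<le>t. Wt q t k * (bb k (z$i) * PW J (t-k) (z - unitv j)))"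
    unfolding F_def using iJ by (intro sum.cong refl) (auto simp: unitv_nth)
  define S where "S = (\<lambda>k. \<Sum>j\<in>J. PW J (t-k) (z + unitv j) + PW J (t-k) (z - unitv j))"
  define G where "G = (\<lambda>k. bb k (z$i) * PW J (t-k) z / 2 + (bb k (z$i + 1) + bb k (z$i - 1)) * PW J (t-k) z / (4*c)
     + bb k (z$i) * S k / (4*c))"
  have SJ: "(\<Sum>j\<in>J. F (z + unitv j) + F (z - unitv j)) = (\<Sum>k\<le>t. Wt q t k * (bb k (z$i) * S k))"
  proof -
    have "(\<Sum>j\<in>J. F (z + unitv j) + F (z - unitv j)) = (\<Sum>j\<in>J. \<Sum>k\<le>t. Wt q t k * (bb k (z$i) * (PW J (t-k) (z + unitv j) + PW J (t-k) (z - unitv j))))"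
      by (intro sum.cong refl) (simp add: Fj1 Fj2 sum.distrib[symmetric] algebra_simps)
    also have "\<dots> = (\<Sum>k\<le>t. \<Sum>j\<in>J. Wt q t k * (bb k (z$i) * (PW J (t-k) (z + unitv j) + PW J (t-k) (z - unitv j))))"
      by (rule sum.swap)
    also have "\<dots> = (\<Sum>k\<le>t. Wt q t k * (bb k (z$i) * S k))"
      by (simp add: S_def sum_distrib_left)
    finally show ?thesis .
  qed
  have LHS: "PW (insert i J) (Suc t) z = F z / 2 + (F (z + unitv i) + F (z - unitv i) + (\<Sum>j\<in>J. F (z + unitv j) + F (z - unitv j))) / (4 * c)"
    using iJ by (simp add: IH c_def sum.insert)
  have RHS: "(\<Sum>k\<le>Suc t. Wt q (Suc t) k * (bb k (z$i) * PW J (Suc t-k) z)) =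
     (1-q) * (\<Sum>k\<le>t. Wt q t k * (bb k (z$i) * PW J (Suc (t-k)) z)) + q * (\<Sum>k\<le>t. Wt q t k * (bb (Suc k) (z$i) * PW J (t-k) z))"
    by (subst Wt_shift) (simp add: Suc_diff_le)
  have L2: "PW (insert i J) (Suc t) z = (\<Sum>k\<le>t. Wt q t k * G k)"
    unfolding LHS SJ Fi1 Fi2 apply (simp add: F_def G_def sum_divide_distrib sum.distrib[symmetric] algebra_simps)
    apply (rule sum.cong[OF refl]) using c1 apply (simp add: field_simps) done
  have R2: "(1-q) * (\<Sum>k\<le>t. Wt q t k * (bb k (z$i) * PW J (Suc (t-k)) z)) + q * (\<Sum>k\<le>t. Wt q t k * (bb (Suc k) (z$i) * PW J (t-k) z))
      = (\<Sum>k\<le>t. Wt q t k * G k)"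
  proof -
    have "\<And>k. (1-q) * (Wt q t k * (bb k (z$i) * PW J (Suc (t-k)) z)) + q * (Wt q t k * (bb (Suc k) (z$i) * PW J (t-k) z)) = Wt q t k * G k"
    proof -
      fix k
      have st: "(1 - 1/c) * PW J (Suc (t-k)) z = (1 - 1/c) * (PW J (t-k) z / 2) + S k / (4 * c)"
        using PW_stepJ[of c J "t-k" z] by (simp add: c_def S_def)
      have "(1-q) * (Wt q t k * (bb k (z$i) * PW J (Suc (t-k)) z)) = Wt q t k * bb k (z$i) * ((1 - 1/c) * PW J (Suc (t-k)) z)"
        by (simp add: q_def)
      also have "\<dots> = Wt q t k * bb k (z$i) * ((1 - 1/c) * (PW J (t-k) z / 2) + S k / (4 * c))" by (simp only: st)
      finally show "(1-q) * (Wt q t k * (bb k (z$i) * PW J (Suc (t-k)) z)) + q * (Wt q t k * (bb (Suc k) (z$i) * PW J (t-k) z)) = Wt q t k * G k"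
        using c1 by (simp add: bb_rec G_def q_def field_simps)
    qed
    then show ?thesis by (simp add: sum_distrib_left sum.distrib[symmetric])
  qed
  show ?case using L2 RHS R2 by (simp add: q_def c_def)
qed



lemma bb_ratio_eq:
  assumes "\<bar>z\<bar> < int k"
  shows "bb k (z+1) * (real_of_int (int k + z) + 1) = bb k z * (real_of_int (int k - z))"
proof -
  define m where "m = nat (int k + z)"
  have zm: "int k + z = int m" using assms by (simp add: m_def)
  have m2: "m < 2*k" using assms zm by linarith
  have n1: "nat (int k + (z+1)) = Suc m" using zm by simp
  have A: "(2*k - m) * (2*k choose m) = Suc m * (2*k choose Suc m)"
    using binomial_absorb_comp[of "2*k" m] binomial_absorption[of m "2*k"] by simp
  have A': "real (2*k - m) * real (2*k choose m) = real (Suc m) * real (2*k choose Suc m)"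
    using A by (metis of_nat_mult)
  have r1: "real (2*k - m) = real_of_int (int k - z)" using zm m2 by simp
  have r2: "real (Suc m) = real_of_int (int k + z) + 1" using zm by simp
  have b1: "bb k z = real (2*k choose m) / 4^k" using assms zm by (simp add: bb_def m_def)
  have nz: "\<not> (z+1 < - int k)" using assms by linarith
  have b2: "bb k (z+1) = real (2*k choose Suc m) / 4^k" using n1 nz by (simp add: bb_def)
  have "bb k (z+1) * (real_of_int (int k + z) + 1) = real (Suc m) * real (2*k choose Suc m) / 4^k"
    by (simp only: b2 r2[symmetric]) simp
  also have "\<dots> = real (2*k - m) * real (2*k choose m) / 4^k" by (simp only: A')
  also have "\<dots> = bb k z * real_of_int (int k - z)" by (simp only: b1 r1[symmetric]) simp
  finally show ?thesis .
qed

lemma bb_ratio: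
  assumes "2 * (\<bar>z\<bar> + 1) \<le> int k"
  shows "bb k (z+1) \<le> (1 + 4 * (real_of_int \<bar>z\<bar> + 1) / real k) * bb k z"
    and "bb k z \<le> (1 + 4 * (real_of_int \<bar>z\<bar> + 1) / real k) * bb k (z+1)"
proof -
  have k0: "real k > 0" using assms by simp
  have E: "bb k (z+1) * (real k + real_of_int z + 1) = bb k z * (real k - real_of_int z)"
    using bb_ratio_eq[of z k] assms by simp
  have "real_of_int (2 * (\<bar>z\<bar> + 1)) \<le> real_of_int (int k)" using assms of_int_le_iff by blast
  then have kk: "2 * (real_of_int \<bar>z\<bar> + 1) \<le> real k" by simp
  define \<eta> where "\<eta> = 4 * (real_of_int \<bar>z\<bar> + 1) / real k"
  have eta0: "\<eta> \<ge> 0" by (simp add: \<eta>_def)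
  have keta: "\<eta> * real k = 4 * (real_of_int \<bar>z\<bar> + 1)" using k0 by (simp add: \<eta>_def)
  have b0: "bb k z \<ge> 0" "bb k (z+1) \<ge> 0" by (simp_all add: bb_nonneg)
  have ab: "real_of_int \<bar>z\<bar> \<ge> real_of_int z" "real_of_int \<bar>z\<bar> \<ge> - real_of_int z" by simp_all
  have p11: "real k + real_of_int z + 1 > 0" using kk ab by (smt (verit))
  have p12: "real k - real_of_int z > 0" using kk ab by (smt (verit))
  note p1 = p11 p12
  show "bb k (z+1) \<le> (1 + 4 * (real_of_int \<bar>z\<bar> + 1) / real k) * bb k z"
  proof -
    have "(real k - real_of_int z) \<le> (1 + \<eta>) * (real k + real_of_int z + 1)"
    proof (cases "z \<ge> 0")
      case True
      have "\<eta> * (real k + real_of_int z + 1) \<ge> 0" using eta0 p1 by simp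
      then show ?thesis using True by (simp add: distrib_right)
    next
      case False
      then have "\<bar>real_of_int z\<bar> = - real_of_int z" by simp
      have "\<eta> * (real k + real_of_int z + 1) \<ge> \<eta> * (real k / 2)"
        using kk False eta0 by (intro mult_left_mono) auto
      also have "\<eta> * (real k / 2) = 2 * (real_of_int \<bar>z\<bar> + 1)" using keta by simp
      finally show ?thesis using False by (simp add: algebra_simps)
    qed
    then have "bb k z * (real k - real_of_int z) \<le> bb k z * ((1 + \<eta>) * (real k + real_of_int z + 1))"
      using b0(1) by (rule mult_left_mono)
    then have "bb k (z+1) * (real k + real_of_int z + 1) \<le> ((1 + \<eta>) * bb k z) * (real k + real_of_int z + 1)"
      using E by (simp add: ac_simps)
    then show ?thesis using p1 unfolding \<eta>_def by (meson mult_le_cancel_right_pos)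
  qed
  show "bb k z \<le> (1 + 4 * (real_of_int \<bar>z\<bar> + 1) / real k) * bb k (z+1)"
  proof -
    have "(real k + real_of_int z + 1) \<le> (1 + \<eta>) * (real k - real_of_int z)"
    proof (cases "z \<ge> 0")
      case False
      have "\<eta> * (real k - real_of_int z) \<ge> 0" using eta0 p1 by simp
      then show ?thesis using False by (simp add: distrib_right)
    next
      case True
      have "\<eta> * (real k - real_of_int z) \<ge> \<eta> * (real k / 2)"
        using kk True eta0 by (intro mult_left_mono) auto
      also have "\<eta> * (real k / 2) = 2 * (real_of_int \<bar>z\<bar> + 1)" using keta by simp
      finally show ?thesis using True by (simp add: algebra_simps)
    qed
    then have "bb k (z+1) * (real k + real_of_int z + 1) \<le> bb k (z+1) * ((1 + \<eta>) * (real k - real_of_int z))"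
      using b0(2) by (rule mult_left_mono)
    then have "bb k z * (real k - real_of_int z) \<le> ((1 + \<eta>) * bb k (z+1)) * (real k - real_of_int z)"
      using E by (simp add: ac_simps)
    then show ?thesis using p1 unfolding \<eta>_def by (meson mult_le_cancel_right_pos)
  qed
qed



lemma nat_ineq_from_real: "2 * (real a + 1) \<le> real k \<Longrightarrow> 2 * (int a + 1) \<le> int k"
proof -
  assume "2 * (real a + 1) \<le> real k"
  then have "real (2 * (a+1)) \<le> real k" by simp
  then have "2 * (a+1) \<le> k" by (simp only: of_nat_le_iff)
  then show ?thesis by simp
qed

lemma bb_lower_nat:
  assumes kD: "2*(D+1) \<le> real k" and D0: "0 \<le> D"
  shows "real a \<le> D \<Longrightarrow> bb k (int a) \<ge> bb k 0 / (1 + 4*(D+1)/real k)^a \<and> bb k (- int a) \<ge> bb k 0 / (1 + 4*(D+1)/real k)^a"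
proof (induction a)
  case 0 then show ?case by simp
next
  case (Suc a)
  define \<eta> where "\<eta> = 4*(D+1)/real k"
  have k0: "real k > 0" using kD D0 by simp
  have eta0: "\<eta> \<ge> 0" using k0 D0 by (simp add: \<eta>_def)
  have IH: "bb k (int a) \<ge> bb k 0 / (1+\<eta>)^a" "bb k (- int a) \<ge> bb k 0 / (1+\<eta>)^a"
    using Suc by (auto simp: \<eta>_def)
  have aD: "real a + 1 \<le> D" using Suc.prems by simp
  have pos: "bb k (int (Suc a)) \<ge> bb k 0 / (1+\<eta>)^(Suc a)"
  proof -
    have c1: "2 * (\<bar>int a\<bar> + 1) \<le> int k" using nat_ineq_from_real[of a k] kD aD by simp
    have "bb k (int a) \<le> (1 + 4 * (real_of_int \<bar>int a\<bar> + 1) / real k) * bb k (int a + 1)"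
      using bb_ratio(2)[OF c1] .
    also have "\<dots> \<le> (1 + \<eta>) * bb k (int a + 1)"
      unfolding \<eta>_def using aD k0 bb_nonneg[of k "int a + 1"]
      by (intro mult_right_mono) (auto simp: divide_right_mono)
    finally have "bb k (int a) \<le> (1 + \<eta>) * bb k (int (Suc a))" by (simp add: add.commute)
    then have "bb k (int a) / (1+\<eta>) \<le> bb k (int (Suc a))" using eta0 by (simp add: divide_simps mult.commute)
    moreover have "bb k 0 / (1+\<eta>)^(Suc a) \<le> bb k (int a) / (1+\<eta>)"
      using IH(1) eta0 by (simp add: divide_simps mult.commute)
    ultimately show ?thesis by linarith
  qed
  have neg: "bb k (- int (Suc a)) \<ge> bb k 0 / (1+\<eta>)^(Suc a)"
  proof -
    have c1: "2 * (\<bar>- int (Suc a)\<bar> + 1) \<le> int k" using nat_ineq_from_real[of "Suc a" k] kD aD by simp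
    have "bb k (- int (Suc a) + 1) \<le> (1 + 4 * (real_of_int \<bar>- int (Suc a)\<bar> + 1) / real k) * bb k (- int (Suc a))"
      using bb_ratio(1)[OF c1] .
    also have "\<dots> \<le> (1 + \<eta>) * bb k (- int (Suc a))"
      unfolding \<eta>_def using aD k0 bb_nonneg[of k "- int (Suc a)"]
      by (intro mult_right_mono) (auto simp: divide_right_mono)
    finally have "bb k (- int a) \<le> (1 + \<eta>) * bb k (- int (Suc a))" by simp
    then have "bb k (- int a) / (1+\<eta>) \<le> bb k (- int (Suc a))" using eta0 by (simp add: divide_simps mult.commute)
    moreover have "bb k 0 / (1+\<eta>)^(Suc a) \<le> bb k (- int a) / (1+\<eta>)"
      using IH(2) eta0 by (simp add: divide_simps mult.commute)
    ultimately show ?thesis by linarith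
  qed
  show ?case using pos neg by (simp add: \<eta>_def)
qed

lemma bb_center: "k > 0 \<Longrightarrow> bb k 0 \<ge> 1 / (2 * real k)"
proof -
  assume k: "k > 0"
  have "4^k / (2 * real k) \<le> real ((2*k) choose k)" by (rule central_binomial_lower_bound[OF k])
  then show ?thesis using k by (simp add: bb_def divide_simps mult.commute)
qed

lemma bb_lower:
  assumes kD: "2*(D+1) \<le> real k" and D0: "0 \<le> D" and zD: "\<bar>real_of_int z\<bar> \<le> D"
  shows "bb k z \<ge> exp (- 4*D*(D+1)/real k) / (2 * real k)"
proof -
  define \<eta> where "\<eta> = 4*(D+1)/real k"
  have k0: "real k > 0" using kD D0 by simp
  have eta0: "\<eta> \<ge> 0" using k0 D0 by (simp add: \<eta>_def)
  define a where "a = nat \<bar>z\<bar>"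
  have aD: "real a \<le> D" using zD by (simp add: a_def)
  have za: "z = int a \<or> z = - int a" by (simp add: a_def) linarith
  have L: "bb k z \<ge> bb k 0 / (1+\<eta>)^a" using bb_lower_nat[OF kD D0 aD] za unfolding \<eta>_def by auto
  have "(1+\<eta>)^a \<le> exp \<eta> ^ a" using eta0 by (intro power_mono) (auto simp: exp_ge_add_one_self add.commute)
  also have "\<dots> = exp (\<eta> * real a)" by (simp add: exp_of_nat_mult[symmetric] mult.commute)
  also have "\<dots> \<le> exp (\<eta> * D)" using eta0 aD by (simp add: mult_left_mono)
  finally have E: "(1+\<eta>)^a \<le> exp (\<eta> * D)" .
  have "bb k 0 / (1+\<eta>)^a \<ge> bb k 0 / exp (\<eta> * D)"
    using E eta0 bb_nonneg[of k 0] by (intro divide_left_mono) (auto intro: mult_pos_pos)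
  moreover have "bb k 0 / exp (\<eta> * D) \<ge> (1 / (2 * real k)) / exp (\<eta> * D)"
    using bb_center[of k] k0 by (intro divide_right_mono) auto
  moreover have "(1 / (2 * real k)) / exp (\<eta> * D) = exp (- 4*D*(D+1)/real k) / (2 * real k)"
  proof -
    have "exp (- 4*D*(D+1)/real k) * exp (\<eta> * D) = exp (- 4*D*(D+1)/real k + \<eta> * D)" by (rule exp_add[symmetric])
    also have "- 4*D*(D+1)/real k + \<eta> * D = 0" using k0 by (simp add: \<eta>_def field_simps)
    finally have ex: "exp (- 4*D*(D+1)/real k) * exp (\<eta> * D) = 1" by simp
    have "exp (- 4*D*(D+1)/real k) = 1 / exp (\<eta> * D)" using ex by (simp add: field_simps)
    then show ?thesis by simp
  qed
  ultimately show ?thesis using L by linarith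
qed

lemma tail_aux:
  assumes q: "0 \<le> q" "q \<le> 1" and S: "S \<subseteq> {..t}" and ab: "0 \<le> a" "0 \<le> b" "0 \<le> c"
    and one: "\<And>k. k \<in> S \<Longrightarrow> 1 \<le> c * (a^k * b^(t-k))"
  shows "(\<Sum>k\<in>S. Wt q t k) \<le> c * ((1-q)*b + q*a)^t"
proof -
  have "(\<Sum>k\<in>S. Wt q t k) \<le> (\<Sum>k\<in>S. Wt q t k * (c * (a^k * b^(t-k))))"
    by (intro sum_mono) (metis mult.right_neutral mult_left_mono one Wt_nonneg[OF q])
  also have "\<dots> \<le> (\<Sum>k\<le>t. Wt q t k * (c * (a^k * b^(t-k))))"
    using S Wt_nonneg[OF q] ab by (intro sum_mono2) auto
  also have "\<dots> = c * (\<Sum>k\<le>t. Wt q t k * (a^k * b^(t-k)))" by (simp add: sum_distrib_left ac_simps)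
  also have "\<dots> = c * ((1-q)*b + q*a)^t" by (simp add: Wt_gen)
  finally show ?thesis .
qed

lemma pow_exp_bound: "0 \<le> x \<Longrightarrow> x \<le> 1 \<Longrightarrow> (1 - x)^t \<le> exp (- x * real t)"
proof -
  assume x: "0 \<le> x" "x \<le> 1"
  have "(1 - x)^t \<le> exp (-x)^t" using x by (intro power_mono) (auto simp: exp_ge_add_one_self[of "-x", simplified])
  also have "\<dots> = exp (- x * real t)" by (simp add: exp_of_nat_mult[symmetric] mult.commute)
  finally show ?thesis .
qed

lemma tail_low:
  assumes q: "0 \<le> q" "q \<le> 1"
  shows "(\<Sum>k\<in>{k. k \<le> t \<and> real k < q * real t / 2}. Wt q t k) \<le> exp (-(1 - ln 2) * q * real t / 2)"
proof -
  define c where "c = (2::real) powr (q * real t / 2)"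
  have one: "1 \<le> c * ((1/2)^k * 1^(t-k))" if "k \<in> {k. k \<le> t \<and> real k < q * real t / 2}" for k
  proof -
    have "(1/2::real)^k = 1 / 2 powr (real k)" by (simp add: powr_realpow power_one_over)
    then have "c * ((1/2)^k * 1^(t-k)) = 2 powr (q * real t / 2) / 2 powr (real k)" by (simp add: c_def)
    also have "\<dots> = 2 powr (q * real t / 2 - real k)" by (simp add: powr_diff)
    finally have "c * ((1/2)^k * 1^(t-k)) = 2 powr (q * real t / 2 - real k)" .
    also have "\<dots> \<ge> 1" using that by (intro ge_one_powr_ge_zero) auto
    finally show ?thesis by simp
  qed
  have "(\<Sum>k\<in>{k. k \<le> t \<and> real k < q * real t / 2}. Wt q t k) \<le> c * ((1-q)*1 + q*(1/2))^t"
    by (rule tail_aux[OF q _ _ _ _ one]) (auto simp: c_def)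
  also have "(1-q)*1 + q*(1/2) = 1 - q/2" by simp
  also have "c * (1 - q/2)^t \<le> c * exp (- (q/2) * real t)"
    using q by (intro mult_left_mono pow_exp_bound) (auto simp: c_def)
  also have "c * exp (- (q/2) * real t) = exp (-(1 - ln 2) * q * real t / 2)"
    by (simp add: c_def powr_def exp_add[symmetric] algebra_simps)
  finally show ?thesis .
qed

lemma tail_up:
  assumes q: "0 \<le> q" "q \<le> 1"
  shows "(\<Sum>k\<in>{k. k \<le> t \<and> real (t - k) < (1-q) * real t / 2}. Wt q t k) \<le> exp (-(1 - ln 2) * (1-q) * real t / 2)"
proof -
  define c where "c = (2::real) powr ((1-q) * real t / 2)"
  have one: "1 \<le> c * (1^k * (1/2)^(t-k))" if "k \<in> {k. k \<le> t \<and> real (t-k) < (1-q) * real t / 2}" for k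
  proof -
    have "(1/2::real)^(t-k) = 1 / 2 powr (real (t-k))" by (simp add: powr_realpow power_one_over)
    then have "c * (1^k * (1/2)^(t-k)) = 2 powr ((1-q) * real t / 2) / 2 powr (real (t-k))" by (simp add: c_def)
    also have "\<dots> = 2 powr ((1-q) * real t / 2 - real (t-k))" by (simp add: powr_diff)
    finally have "c * (1^k * (1/2)^(t-k)) = 2 powr ((1-q) * real t / 2 - real (t-k))" .
    also have "\<dots> \<ge> 1" using that by (intro ge_one_powr_ge_zero) auto
    finally show ?thesis by simp
  qed
  have "(\<Sum>k\<in>{k. k \<le> t \<and> real (t-k) < (1-q) * real t / 2}. Wt q t k) \<le> c * ((1-q)*(1/2) + q*1)^t"
    by (rule tail_aux[OF q _ _ _ _ one]) (auto simp: c_def)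
  also have "(1-q)*(1/2) + q*1 = 1 - (1-q)/2" by (simp add: field_simps)
  also have "c * (1 - (1-q)/2)^t \<le> c * exp (- ((1-q)/2) * real t)"
    using q by (intro mult_left_mono pow_exp_bound) (auto simp: c_def)
  also have "c * exp (- ((1-q)/2) * real t) = exp (-(1 - ln 2) * (1-q) * real t / 2)"
    by (simp add: c_def powr_def exp_add[symmetric] field_simps)
  finally show ?thesis .
qed



lemma card_le_CARD: "card (I :: 'd::finite set) \<le> CARD('d)"
  by (rule card_mono) auto

lemma sum_cover:
  fixes f :: "nat \<Rightarrow> real"
  assumes "finite A" "A \<subseteq> B \<union> C \<union> E" "\<And>x. 0 \<le> f x" "finite B" "finite C" "finite E"
  shows "sum f A \<le> sum f B + sum f C + sum f E"
proof -
  have "sum f A \<le> sum f (B \<union> C \<union> E)" using assms by (intro sum_mono2) auto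
  also have "\<dots> \<le> sum f (B \<union> C) + sum f E"
    using sum_Un[of "B \<union> C" E f] assms sum_nonneg[of "(B \<union> C) \<inter> E" f] by auto
  also have "sum f (B \<union> C) \<le> sum f B + sum f C"
    using sum_Un[of B C f] assms sum_nonneg[of "B \<inter> C" f] by auto
  finally show ?thesis by linarith
qed

lemma PW_lower:
  fixes I :: "'d::finite set" and D T Tmax :: real
  assumes D0: "0 \<le> D" and TD: "2*(D+1) \<le> T" and Te: "exp (-(1 - ln 2) * T) \<le> 1/4" and Tm: "Tmax > 0"
  shows "\<forall>s z. (I \<noteq> {} \<longrightarrow> (2*real CARD('d))^(card I) * T \<le> real s) \<longrightarrow> real s \<le> Tmax \<longrightarrow>
     (\<forall>j\<in>I. \<bar>real_of_int (z$j)\<bar> \<le> D) \<longrightarrow> PW I s z \<ge> (exp (-4*D*(D+1)/T) / (4*Tmax))^(card I)"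
proof -
  have fin: "finite I" by simp
  define M where "M = 2 * real CARD('d)"
  define E where "E = exp (-4*D*(D+1)/T)"
  have "0 < CARD('d)" by (rule finite_UNIV_card_ge_0) simp
  then have "real CARD('d) \<ge> 1" by (simp add: Suc_le_eq[symmetric])
  then have M1: "M \<ge> 1" unfolding M_def by linarith
  have T0: "T > 0" using TD D0 by (smt (verit))
  have E0: "E > 0" by (simp add: E_def)
  show ?thesis using fin
  proof (induction I rule: finite_induct)
    case empty then show ?case by (simp add: PW_empty)
  next
    case (insert i J)
    show ?case
    proof (intro allI impI)
      fix s :: nat and z :: "int^'d"
      assume sT: "insert i J \<noteq> {} \<longrightarrow> (2*real CARD('d))^(card (insert i J)) * T \<le> real s"
        and sTm: "real s \<le> Tmax" and zD: "\<forall>j\<in>insert i J. \<bar>real_of_int (z$j)\<bar> \<le> D"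
      define c where "c = card J + 1"
      define q where "q = 1 / (real (card J) + 1)"
      have cI: "card (insert i J) = c" using insert by (simp add: c_def)
      have c1: "c \<ge> 1" by (simp add: c_def)
      have cd: "c \<le> CARD('d)" using card_le_CARD[of "insert i J"] cI by simp
      have q01: "0 \<le> q" "q \<le> 1" by (simp_all add: q_def)
      have qc: "q = 1 / real c" by (simp add: q_def c_def)
      have sM: "M^c * T \<le> real s" using sT cI by (simp add: M_def)
      have Mc: "M^c = M * M^(c-1)" using c1 by (metis Suc_diff_le diff_Suc_1 power_Suc)
      have McT: "M^(c-1) * T \<ge> T" using M1 T0 by (simp add: one_le_power)
      have s0: "real s \<ge> 0" by simp
      have key: "real s / (2 * real c) \<ge> M^(c-1) * T"
      proof -
        have "real s / M \<le> real s / (2 * real c)" using cd c1 s0 by (intro divide_left_mono) (auto simp: M_def)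
        moreover have "M^(c-1) * T \<le> real s / M" using sM Mc M1 by (simp add: field_simps)
        ultimately show ?thesis by linarith
      qed
      have qs: "q * real s / 2 = real s / (2 * real c)" by (simp add: qc)
      define G where "G = {k. k \<le> s \<and> q * real s / 2 \<le> real k \<and> (1-q) * real s / 2 \<le> real (s - k)}"
      define Lo where "Lo = {k. k \<le> s \<and> real k < q * real s / 2}"
      define Up where "Up = {k. k \<le> s \<and> real (s - k) < (1-q) * real s / 2}"
      have cover: "{..s} \<subseteq> G \<union> Lo \<union> Up" by (auto simp: G_def Lo_def Up_def)
      have Lo_b: "sum (Wt q s) Lo \<le> 1/4"
      proof -
        have "sum (Wt q s) Lo \<le> exp (-(1 - ln 2) * q * real s / 2)" unfolding Lo_def by (rule tail_low[OF q01])
        also have "\<dots> \<le> exp (-(1 - ln 2) * T)"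
        proof -
          have "T \<le> q * real s / 2" using key McT qs by linarith
          then have "(1 - ln 2) * T \<le> (1 - ln 2) * (q * real s / 2)" using ln_2_less_1 by (intro mult_left_mono) auto
          then have "-(1 - ln 2) * q * real s / 2 \<le> -(1 - ln 2) * T" by (simp add: field_simps)
          then show ?thesis by simp
        qed
        finally show ?thesis using Te by linarith
      qed
      have Up_b: "sum (Wt q s) Up \<le> 1/4"
      proof (cases "J = {}")
        case True
        then have "q = 1" by (simp add: q_def)
        then have "Up = {}" by (auto simp: Up_def)
        then show ?thesis by simp
      next
        case False
        then have c2: "c \<ge> 2" using insert by (simp add: c_def card_gt_0_iff Suc_le_eq)
        have "(1-q) * real s / 2 \<ge> real s / (2 * real c)"
        proof -
          have "1 - q \<ge> 1/real c" using c2 by (simp add: qc field_simps)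
          then have "(1/real c) * real s \<le> (1-q) * real s" using s0 by (rule mult_right_mono)
            then show ?thesis by simp
        qed
        then have "(1-q) * real s / 2 \<ge> T" using key McT by linarith
        have "sum (Wt q s) Up \<le> exp (-(1 - ln 2) * (1-q) * real s / 2)" unfolding Up_def by (rule tail_up[OF q01])
        also have "\<dots> \<le> exp (-(1 - ln 2) * T)"
        proof -
          have "(1 - ln 2) * T \<le> (1 - ln 2) * ((1-q) * real s / 2)" using \<open>(1-q) * real s / 2 \<ge> T\<close> ln_2_less_1 by (intro mult_left_mono) auto
          then have "-(1 - ln 2) * (1-q) * real s / 2 \<le> -(1 - ln 2) * T" by (simp add: field_simps)
          then show ?thesis by simp
        qed
        finally show ?thesis using Te by linarith
      qed
      have G_b: "sum (Wt q s) G \<ge> 1/2"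
      proof -
        have "1 = sum (Wt q s) {..s}" by (simp add: Wt_sum1)
        also have "\<dots> \<le> sum (Wt q s) G + sum (Wt q s) Lo + sum (Wt q s) Up"
          by (rule sum_cover[OF _ cover]) (auto simp: Wt_nonneg[OF q01] G_def Lo_def Up_def)
        finally show ?thesis using Lo_b Up_b by linarith
      qed
      define LJ where "LJ = (E / (4*Tmax))^(card J)"
      have trm: "bb k (z$i) * PW J (s-k) z \<ge> (E / (2*Tmax)) * LJ" if kG: "k \<in> G" for k
      proof -
        have kT: "real k \<ge> T" using kG key McT qs by (auto simp: G_def)
        have ks: "real k \<le> Tmax" using kG sTm by (auto simp: G_def)
        have b1: "bb k (z$i) \<ge> exp (-4*D*(D+1)/real k) / (2 * real k)"
          using bb_lower[of D k "z$i"] TD kT D0 zD by auto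
        have "exp (-4*D*(D+1)/real k) \<ge> E"
          unfolding E_def using kT T0 D0 by (auto intro!: divide_left_mono mult_nonneg_nonneg)
        then have "exp (-4*D*(D+1)/real k) / (2 * real k) \<ge> E / (2 * real k)"
          by (intro divide_right_mono) auto
        moreover have "E / (2 * real k) \<ge> E / (2 * Tmax)"
          using E0 ks kT T0 by (intro divide_left_mono) auto
        ultimately have b2: "bb k (z$i) \<ge> E / (2*Tmax)" using b1 by linarith
        have p2: "PW J (s-k) z \<ge> LJ"
        proof (cases "J = {}")
          case True then show ?thesis by (simp add: LJ_def PW_empty)
        next
          case False
          then have c2: "c \<ge> 2" using insert by (simp add: c_def card_gt_0_iff Suc_le_eq)
          have "(1-q) * real s / 2 \<ge> real s / (2 * real c)"
          proof -
            have "1 - q \<ge> 1/real c" using c2 by (simp add: qc field_simps)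
            then have "(1/real c) * real s \<le> (1-q) * real s" using s0 by (rule mult_right_mono)
            then show ?thesis by simp
          qed
          then have "real (s-k) \<ge> M^(c-1) * T" using kG key by (auto simp: G_def)
          moreover have "c - 1 = card J" by (simp add: c_def)
          ultimately have a1: "(2*real CARD('d))^(card J) * T \<le> real (s-k)" by (simp add: M_def)
          have a2: "real (s-k) \<le> Tmax" using sTm kG by (auto simp: G_def)
          show ?thesis using insert.IH a1 a2 zD False unfolding LJ_def E_def by auto
        qed
        have "bb k (z$i) * PW J (s-k) z \<ge> (E / (2*Tmax)) * PW J (s-k) z"
          using b2 PW_nonneg by (rule mult_right_mono)
        also have "(E / (2*Tmax)) * PW J (s-k) z \<ge> (E / (2*Tmax)) * LJ"
          using p2 E0 Tm by (intro mult_left_mono) auto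
        finally show ?thesis .
      qed
      have "PW (insert i J) s z = (\<Sum>k\<le>s. Wt q s k * (bb k (z$i) * PW J (s-k) z))"
        using PW_rep[OF insert.hyps(2)] by (simp add: q_def)
      also have "\<dots> \<ge> (\<Sum>k\<in>G. Wt q s k * (bb k (z$i) * PW J (s-k) z))"
        by (intro sum_mono2) (auto simp: G_def Wt_nonneg[OF q01] bb_nonneg PW_nonneg)
      also have "(\<Sum>k\<in>G. Wt q s k * (bb k (z$i) * PW J (s-k) z)) \<ge> (\<Sum>k\<in>G. Wt q s k * ((E / (2*Tmax)) * LJ))"
        by (intro sum_mono mult_left_mono trm Wt_nonneg[OF q01])
      also have "(\<Sum>k\<in>G. Wt q s k * ((E / (2*Tmax)) * LJ)) = sum (Wt q s) G * ((E / (2*Tmax)) * LJ)"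
        by (rule sum_distrib_right[symmetric])
      also have "\<dots> \<ge> (1/2) * ((E / (2*Tmax)) * LJ)"
        using G_b E0 Tm by (intro mult_right_mono) (auto simp: LJ_def)
      finally have "PW (insert i J) s z \<ge> (1/2) * ((E / (2*Tmax)) * LJ)" .
      moreover have "(1/2) * ((E / (2*Tmax)) * LJ) = (E / (4*Tmax))^(card (insert i J))"
        using insert.hyps by (simp add: LJ_def)
      ultimately show "PW (insert i J) s z \<ge> (exp (-4*D*(D+1)/T) / (4*Tmax))^(card (insert i J))"
        by (simp add: E_def)
    qed
  qed
qed



lemma bb_diff:
  assumes "2 * (\<bar>z\<bar> + 1) \<le> int k" and eta: "4 * (real_of_int \<bar>z\<bar> + 1) / real k \<le> \<eta>"
  shows "\<bar>bb k (z+1) - bb k z\<bar> \<le> \<eta> * bb k z" "\<bar>bb k (z+1) - bb k z\<bar> \<le> \<eta> * bb k (z+1)"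
proof -
  note r1 = bb_ratio(1)[OF assms(1)] and r2 = bb_ratio(2)[OF assms(1)]
  define e where "e = 4 * (real_of_int \<bar>z\<bar> + 1) / real k"
  have e0: "e \<ge> 0" by (simp add: e_def)
  have b: "bb k z \<ge> 0" "bb k (z+1) \<ge> 0" by (simp_all add: bb_nonneg)
  have m1: "e * bb k z \<le> \<eta> * bb k z" "e * bb k (z+1) \<le> \<eta> * bb k (z+1)"
    unfolding e_def by (rule mult_right_mono[OF eta b(1)], rule mult_right_mono[OF eta b(2)])
  have u1: "bb k (z+1) - bb k z \<le> e * bb k z" using r1 by (simp add: e_def algebra_simps)
  have u2: "bb k z - bb k (z+1) \<le> e * bb k (z+1)" using r2 by (simp add: e_def algebra_simps)
  have n1: "e * bb k z \<le> \<eta> * bb k z" using m1 by simp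
  have et0: "0 \<le> \<eta>" using eta e0 unfolding e_def by linarith
  show "\<bar>bb k (z+1) - bb k z\<bar> \<le> \<eta> * bb k z"
  proof (cases "bb k (z+1) \<le> bb k z")
    case True
    have "e * bb k (z+1) \<le> e * bb k z" using True e0 by (rule mult_left_mono)
    then show ?thesis using u2 n1 True by linarith
  next
    case False
    have "0 \<le> \<eta> * bb k z" using et0 b by simp
    then show ?thesis using u1 n1 False by linarith
  qed
  show "\<bar>bb k (z+1) - bb k z\<bar> \<le> \<eta> * bb k (z+1)"
  proof (cases "bb k z \<le> bb k (z+1)")
    case True
    have "e * bb k z \<le> e * bb k (z+1)" using True e0 by (rule mult_left_mono)
    then show ?thesis using u1 m1(2) True by linarith
  next
    case False
    have "0 \<le> \<eta> * bb k (z+1)" using et0 b by simp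
    then show ?thesis using u2 m1(2) False by linarith
  qed
qed

lemma onestep:
  fixes z :: "int^'d::finite" and i :: 'd
  assumes D0: "0 \<le> D" and zD: "\<bar>real_of_int (z$i)\<bar> \<le> D"
    and tD: "4 * real CARD('d) * (D+1) \<le> real t"
  shows "\<bar>PW UNIV t (z + unitv i) - PW UNIV t z\<bar> \<le> (8 * real CARD('d) * (D+1) / real t) * PW UNIV t z
            + 2 * exp (-(1 - ln 2) * real t / (2 * real CARD('d)))"
    and "\<bar>PW UNIV t (z + unitv i) - PW UNIV t z\<bar> \<le> (8 * real CARD('d) * (D+1) / real t) * PW UNIV t (z + unitv i)
            + 2 * exp (-(1 - ln 2) * real t / (2 * real CARD('d)))"
proof -
  define J where "J = UNIV - {i}"
  have iJ: "i \<notin> J" and UJ: "UNIV = insert i J" by (auto simp: J_def)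
  have cJ: "real (card J) + 1 = real CARD('d)"
    using UJ iJ by (metis card_insert_disjoint finite of_nat_Suc add.commute)
  define d where "d = real CARD('d)"
  have d1: "d \<ge> 1"
  proof -
    have "0 < CARD('d)" by (rule finite_UNIV_card_ge_0) simp
    then show ?thesis by (simp add: d_def Suc_le_eq[symmetric])
  qed
  define q where "q = 1 / d"
  have q01: "0 \<le> q" "q \<le> 1" using d1 by (simp_all add: q_def)
  define \<eta> where "\<eta> = 8 * d * (D+1) / real t"
  define \<tau> where "\<tau> = exp (-(1 - ln 2) * real t / (2 * d))"
  have "4 * real CARD('d) * (D+1) > 0" using D0 d1 unfolding d_def by (intro mult_pos_pos) auto
  then have t0: "real t > 0" using tD by linarith
  have eta0: "\<eta> \<ge> 0" using d1 D0 t0 by (simp add: \<eta>_def)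
  define R where "R = (\<lambda>k. PW J (t-k) z)"
  have rep0: "PW UNIV t z = (\<Sum>k\<le>t. Wt q t k * (bb k (z$i) * R k))"
    using PW_rep[OF iJ, of t z] UJ cJ by (simp add: q_def d_def R_def)
  have rep1: "PW UNIV t (z + unitv i) = (\<Sum>k\<le>t. Wt q t k * (bb k (z$i + 1) * R k))"
  proof -
    have "PW UNIV t (z + unitv i) = (\<Sum>k\<le>t. Wt q t k * (bb k ((z + unitv i)$i) * PW J (t-k) (z + unitv i)))"
      using PW_rep[OF iJ, of t "z + unitv i"] UJ cJ by (simp add: q_def d_def)
    also have "\<dots> = (\<Sum>k\<le>t. Wt q t k * (bb k (z$i + 1) * R k))"
      unfolding R_def using iJ by (intro sum.cong refl) (auto simp: unitv_nth intro!: PW_cong)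
    finally show ?thesis .
  qed
  define Lo where "Lo = {k. k \<le> t \<and> real k < q * real t / 2}"
  define Hi where "Hi = {k. k \<le> t \<and> \<not> real k < q * real t / 2}"
  have split: "{..t} = Lo \<union> Hi" "Lo \<inter> Hi = {}" by (auto simp: Lo_def Hi_def)
  have fin: "finite Lo" "finite Hi" by (auto simp: Lo_def Hi_def)
  define f where "f = (\<lambda>k. Wt q t k * ((bb k (z$i + 1) - bb k (z$i)) * R k))"
  have diff: "PW UNIV t (z + unitv i) - PW UNIV t z = sum f Lo + sum f Hi"
  proof -
    have "PW UNIV t (z + unitv i) - PW UNIV t z = sum f {..t}"
      unfolding rep0 rep1 f_def by (simp add: sum_subtractf[symmetric] algebra_simps)
    also have "\<dots> = sum f Lo + sum f Hi" using split fin by (simp add: sum.union_disjoint)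
    finally show ?thesis .
  qed
  have Wn: "\<And>k. Wt q t k \<ge> 0" using Wt_nonneg[OF q01] by blast
  have Rn: "\<And>k. R k \<ge> 0" "\<And>k. R k \<le> 1" by (simp_all add: R_def PW_nonneg PW_le1)
  have Lo_b: "\<bar>sum f Lo\<bar> \<le> 2 * \<tau>"
  proof -
    have "\<bar>sum f Lo\<bar> \<le> (\<Sum>k\<in>Lo. \<bar>f k\<bar>)" by (rule sum_abs)
    also have "\<dots> \<le> (\<Sum>k\<in>Lo. 2 * Wt q t k)"
    proof (intro sum_mono)
      fix k
      have "\<bar>bb k (z$i + 1) - bb k (z$i)\<bar> \<le> 1"
        unfolding abs_le_iff using bb_nonneg[of k "z$i"] bb_nonneg[of k "z$i+1"] bb_le1[of k "z$i"] bb_le1[of k "z$i+1"] by linarith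
      then have "\<bar>bb k (z$i + 1) - bb k (z$i)\<bar> * R k \<le> 1 * 1"
        using Rn by (intro mult_mono) auto
      then have "\<bar>(bb k (z$i + 1) - bb k (z$i)) * R k\<bar> \<le> 2" using Rn by (simp add: abs_mult)
      then have "\<bar>f k\<bar> \<le> Wt q t k * 2" unfolding f_def using Wn[of k]
        by (simp add: abs_mult mult_left_mono)
      then show "\<bar>f k\<bar> \<le> 2 * Wt q t k" by simp
    qed
    also have "\<dots> = 2 * sum (Wt q t) Lo" by (simp add: sum_distrib_left)
    also have "sum (Wt q t) Lo \<le> \<tau>"
    proof -
      have "sum (Wt q t) Lo \<le> exp (-(1 - ln 2) * q * real t / 2)" unfolding Lo_def by (rule tail_low[OF q01])
      also have "\<dots> = \<tau>" by (simp add: \<tau>_def q_def)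
      finally show ?thesis .
    qed
    finally show ?thesis by linarith
  qed
  have kHi: "2 * (\<bar>z$i\<bar> + 1) \<le> int k \<and> 4 * (real_of_int \<bar>z$i\<bar> + 1) / real k \<le> \<eta>" if "k \<in> Hi" for k
  proof -
    have k1: "real k \<ge> real t / (2*d)" using that d1 by (simp add: Hi_def q_def)
    have "real t / (2*d) \<ge> 2 * (D+1)" using tD d1 by (simp add: d_def field_simps)
    then have k2: "real k \<ge> 2 * (D+1)" using k1 by linarith
    have a1: "real_of_int \<bar>z$i\<bar> \<le> D" using zD by simp
    have "real_of_int (2 * (\<bar>z$i\<bar> + 1)) \<le> real_of_int (int k)" using k2 a1 by simp
    then have c1: "2 * (\<bar>z$i\<bar> + 1) \<le> int k" by (simp only: of_int_le_iff)
    have kp: "real k > 0" using k2 D0 by (smt (verit))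
    have "4 * (real_of_int \<bar>z$i\<bar> + 1) / real k \<le> 4 * (D + 1) / real k"
      using a1 kp by (intro divide_right_mono) auto
    also have "\<dots> \<le> 4 * (D+1) / (real t / (2*d))"
      using k1 D0 t0 d1 kp by (intro divide_left_mono) auto
    also have "\<dots> = \<eta>" using d1 t0 by (simp add: \<eta>_def field_simps)
    finally show ?thesis using c1 by simp
  qed
  have Hi_b: "\<bar>sum f Hi\<bar> \<le> \<eta> * PW UNIV t z" "\<bar>sum f Hi\<bar> \<le> \<eta> * PW UNIV t (z + unitv i)"
  proof -
    have "\<bar>sum f Hi\<bar> \<le> (\<Sum>k\<in>Hi. \<bar>f k\<bar>)" by (rule sum_abs)
    also have "\<dots> \<le> (\<Sum>k\<in>Hi. \<eta> * (Wt q t k * (bb k (z$i) * R k)))"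
    proof (intro sum_mono)
      fix k assume k: "k \<in> Hi"
      have "\<bar>bb k (z$i + 1) - bb k (z$i)\<bar> \<le> \<eta> * bb k (z$i)" using bb_diff(1) kHi[OF k] by blast
      then have "\<bar>bb k (z$i + 1) - bb k (z$i)\<bar> * R k \<le> \<eta> * bb k (z$i) * R k" using Rn by (intro mult_right_mono) auto
      then have "Wt q t k * (\<bar>bb k (z$i + 1) - bb k (z$i)\<bar> * R k) \<le> Wt q t k * (\<eta> * bb k (z$i) * R k)"
        using Wn by (intro mult_left_mono) auto
      then show "\<bar>f k\<bar> \<le> \<eta> * (Wt q t k * (bb k (z$i) * R k))" unfolding f_def using Wn[of k] Rn
        by (simp add: abs_mult ac_simps)
    qed
    also have "\<dots> = \<eta> * (\<Sum>k\<in>Hi. Wt q t k * (bb k (z$i) * R k))" by (simp add: sum_distrib_left)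
    also have "(\<Sum>k\<in>Hi. Wt q t k * (bb k (z$i) * R k)) \<le> PW UNIV t z"
      unfolding rep0 using Wn Rn bb_nonneg by (intro sum_mono2) (auto simp: Hi_def)
    finally show "\<bar>sum f Hi\<bar> \<le> \<eta> * PW UNIV t z" using eta0 by (smt (verit) mult_left_mono)
    have "\<bar>sum f Hi\<bar> \<le> (\<Sum>k\<in>Hi. \<bar>f k\<bar>)" by (rule sum_abs)
    also have "\<dots> \<le> (\<Sum>k\<in>Hi. \<eta> * (Wt q t k * (bb k (z$i + 1) * R k)))"
    proof (intro sum_mono)
      fix k assume k: "k \<in> Hi"
      have "\<bar>bb k (z$i + 1) - bb k (z$i)\<bar> \<le> \<eta> * bb k (z$i + 1)" using bb_diff(2) kHi[OF k] by blast
      then have "\<bar>bb k (z$i + 1) - bb k (z$i)\<bar> * R k \<le> \<eta> * bb k (z$i + 1) * R k" using Rn by (intro mult_right_mono) auto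
      then have "Wt q t k * (\<bar>bb k (z$i + 1) - bb k (z$i)\<bar> * R k) \<le> Wt q t k * (\<eta> * bb k (z$i + 1) * R k)"
        using Wn by (intro mult_left_mono) auto
      then show "\<bar>f k\<bar> \<le> \<eta> * (Wt q t k * (bb k (z$i + 1) * R k))" unfolding f_def using Wn[of k] Rn
        by (simp add: abs_mult ac_simps)
    qed
    also have "\<dots> = \<eta> * (\<Sum>k\<in>Hi. Wt q t k * (bb k (z$i + 1) * R k))" by (simp add: sum_distrib_left)
    also have "(\<Sum>k\<in>Hi. Wt q t k * (bb k (z$i + 1) * R k)) \<le> PW UNIV t (z + unitv i)"
      unfolding rep1 using Wn Rn bb_nonneg by (intro sum_mono2) (auto simp: Hi_def)
    finally show "\<bar>sum f Hi\<bar> \<le> \<eta> * PW UNIV t (z + unitv i)" using eta0 by (smt (verit) mult_left_mono)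
  qed
  show "\<bar>PW UNIV t (z + unitv i) - PW UNIV t z\<bar> \<le> (8 * real CARD('d) * (D+1) / real t) * PW UNIV t z
            + 2 * exp (-(1 - ln 2) * real t / (2 * real CARD('d)))"
    using diff Lo_b Hi_b(1) unfolding \<eta>_def \<tau>_def d_def by linarith
  show "\<bar>PW UNIV t (z + unitv i) - PW UNIV t z\<bar> \<le> (8 * real CARD('d) * (D+1) / real t) * PW UNIV t (z + unitv i)
            + 2 * exp (-(1 - ln 2) * real t / (2 * real CARD('d)))"
    using diff Lo_b Hi_b(2) unfolding \<eta>_def \<tau>_def d_def by linarith
qed



definition boxD :: "real \<Rightarrow> (int^'d::finite) set" where
  "boxD D = {v. \<forall>j. \<bar>real_of_int (v$j)\<bar> \<le> D}"

definition l1 :: "int^'d::finite \<Rightarrow> nat" where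
  "l1 w = (\<Sum>j\<in>UNIV. nat \<bar>w$j\<bar>)"

lemma l1_step:
  fixes w :: "int^'d::finite"
  assumes "w$j \<noteq> 0" "l1 w = Suc m"
  shows "l1 (w - sgn (w$j) *s unitv j) = m"
proof -
  define w1 where "w1 = w - sgn (w$j) *s unitv j"
  have o: "\<And>j'. j' \<noteq> j \<Longrightarrow> w1$j' = w$j'" by (simp add: w1_def unitv_nth)
  have jj: "nat \<bar>w1$j\<bar> + 1 = nat \<bar>w$j\<bar>" using assms(1)
    by (auto simp: w1_def unitv_nth sgn_if)
  have "l1 w = nat \<bar>w$j\<bar> + (\<Sum>j'\<in>UNIV - {j}. nat \<bar>w$j'\<bar>)" unfolding l1_def
    by (simp add: sum.remove[of UNIV j])
  moreover have "l1 w1 = nat \<bar>w1$j\<bar> + (\<Sum>j'\<in>UNIV - {j}. nat \<bar>w$j'\<bar>)" unfolding l1_def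
    by (simp add: sum.remove[of UNIV j] o)
  ultimately show ?thesis using assms(2) jj by (simp add: w1_def)
qed

lemma l1_zero: "l1 w = 0 \<Longrightarrow> w = 0"
  by (auto simp: l1_def vec_eq_iff)

lemma path_bound:
  fixes P :: "int^'d::finite \<Rightarrow> real"
  assumes th: "0 \<le> \<theta>" and Pn: "\<And>v. 0 \<le> P v"
    and step: "\<And>v i. v \<in> boxD D \<Longrightarrow> v + unitv i \<in> boxD D \<Longrightarrow> P (v + unitv i) \<le> (1+\<theta>) * P v \<and> P v \<le> (1+\<theta>) * P (v + unitv i)"
  shows "l1 w = m \<Longrightarrow> z \<in> boxD D \<Longrightarrow> z + w \<in> boxD D \<Longrightarrow> P (z + w) \<le> (1+\<theta>)^m * P z"
proof (induction m arbitrary: z w)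
  case 0 then have "w = 0" by (simp add: l1_zero)
  then show ?case by simp
next
  case (Suc m)
  have "w \<noteq> 0"
  proof
    assume "w = 0" then have "l1 w = 0" by (simp add: l1_def)
    then show False using Suc.prems(1) by simp
  qed
  then obtain j where j: "w$j \<noteq> 0" by (metis vec_eq_iff zero_index)
  define s where "s = sgn (w$j)"
  define z1 where "z1 = z + s *s unitv j"
  define w1 where "w1 = w - s *s unitv j"
  have lw1: "l1 w1 = m" using l1_step[OF j Suc.prems(1)] by (simp add: w1_def s_def)
  have zw: "z1 + w1 = z + w" by (simp add: z1_def w1_def)
  have z1B: "z1 \<in> boxD D"
    unfolding boxD_def mem_Collect_eq
  proof (intro allI)
    fix j'
    show "\<bar>real_of_int (z1$j')\<bar> \<le> D"
    proof (cases "j' = j")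
      case False then show ?thesis using Suc.prems(2) by (simp add: z1_def unitv_nth boxD_def)
    next
      case True
      have a: "\<bar>real_of_int (z$j)\<bar> \<le> D" "\<bar>real_of_int (z$j + w$j)\<bar> \<le> D"
        using Suc.prems(2,3) by (auto simp: boxD_def)
      have "z1$j = z$j + s" by (simp add: z1_def unitv_nth)
      moreover have "(z$j \<le> z$j + s \<and> z$j + s \<le> z$j + w$j) \<or> (z$j + w$j \<le> z$j + s \<and> z$j + s \<le> z$j)"
        using j by (auto simp: s_def sgn_if)
      ultimately show ?thesis using a True by (auto simp: abs_le_iff)
    qed
  qed
  have IH: "P (z + w) \<le> (1+\<theta>)^m * P z1" using Suc.IH[OF lw1 z1B] zw Suc.prems(3) by simp
  have one: "P z1 \<le> (1+\<theta>) * P z"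
  proof (cases "w$j > 0")
    case True
    then have "z1 = z + unitv j" by (simp add: z1_def s_def)
    then show ?thesis using step[of z j] Suc.prems(2) z1B by auto
  next
    case False
    then have "s = -1" using j by (simp add: s_def sgn_if)
    then have "z = z1 + unitv j" by (simp add: z1_def vec_eq_iff)
    then show ?thesis using step[of z1 j] Suc.prems(2) z1B by auto
  qed
  have "(1+\<theta>)^m * P z1 \<le> (1+\<theta>)^m * ((1+\<theta>) * P z)" using one th by (intro mult_left_mono) auto
  then show ?case using IH by (simp add: ac_simps)
qed



lemma l1_swap: "l1 (z - z') = l1 (z' - z)"
  unfolding l1_def by (intro sum.cong refl) (simp add: abs_minus_commute)

lemma combined:
  fixes z z' :: "int^'d::finite" and D :: real and t :: nat
  defines "d \<equiv> real CARD('d)"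
  defines "T \<equiv> real t / (2 * d) ^ CARD('d)"
  defines "L \<equiv> (exp (-4*D*(D+1)/T) / (4 * real t)) ^ CARD('d)"
  defines "\<theta> \<equiv> 8 * d * (D+1) / real t + 2 * exp (-(1 - ln 2) * real t / (2 * d)) / L"
  assumes D0: "0 \<le> D" and zB: "z \<in> boxD D" "z' \<in> boxD D"
    and tD: "4 * d * (D+1) \<le> real t"
    and TD: "2*(D+1) \<le> T" and Te: "exp (-(1 - ln 2) * T) \<le> 1/4"
  shows "\<bar>PW UNIV t z' - PW UNIV t z\<bar> \<le> (exp (\<theta> * real (l1 (z' - z))) - 1) * PW UNIV t z"
proof -
  have d1: "d \<ge> 1"
  proof -
    have "0 < CARD('d)" by (rule finite_UNIV_card_ge_0) simp
    then show ?thesis by (simp add: d_def Suc_le_eq[symmetric])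
  qed
  have "4 * d * (D+1) > 0" using D0 d1 by (intro mult_pos_pos) auto
  then have t0: "real t > 0" using tD by linarith
  have L0: "L > 0" unfolding L_def using t0 by simp
  have th0: "\<theta> \<ge> 0" unfolding \<theta>_def using L0 t0 D0 d1 by (intro add_nonneg_nonneg) auto
  define P where "P = PW (UNIV::'d set) t"
  have Pn: "\<And>v. 0 \<le> P v" by (simp add: P_def PW_nonneg)
  have low: "P v \<ge> L" if "v \<in> boxD D" for v
  proof -
    have "\<forall>s z. (UNIV \<noteq> ({}::'d set) \<longrightarrow> (2*real CARD('d))^(card (UNIV::'d set)) * T \<le> real s) \<longrightarrow> real s \<le> real t \<longrightarrow>
      (\<forall>j\<in>(UNIV::'d set). \<bar>real_of_int (z$j)\<bar> \<le> D) \<longrightarrow> PW UNIV s z \<ge> (exp (-4*D*(D+1)/T) / (4*real t))^(card (UNIV::'d set))"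
      by (rule PW_lower[OF D0 TD Te t0])
    moreover have "(2*real CARD('d))^(card (UNIV::'d set)) * T = real t" unfolding T_def d_def using d1 d_def by simp
    ultimately show ?thesis using that unfolding P_def L_def boxD_def by auto
  qed
  have step: "P (v + unitv i) \<le> (1+\<theta>) * P v \<and> P v \<le> (1+\<theta>) * P (v + unitv i)"
    if v: "v \<in> boxD D" "v + unitv i \<in> boxD D" for v i
  proof -
    have zi: "\<bar>real_of_int (v$i)\<bar> \<le> D" using v by (simp add: boxD_def)
    define \<eta> where "\<eta> = 8 * d * (D+1) / real t"
    define \<tau> where "\<tau> = exp (-(1 - ln 2) * real t / (2 * d))"
    have o1: "\<bar>P (v + unitv i) - P v\<bar> \<le> \<eta> * P v + 2 * \<tau>"
      using onestep(1)[OF D0 zi] tD unfolding P_def \<eta>_def \<tau>_def d_def by simp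
    have o2: "\<bar>P (v + unitv i) - P v\<bar> \<le> \<eta> * P (v + unitv i) + 2 * \<tau>"
      using onestep(2)[OF D0 zi] tD unfolding P_def \<eta>_def \<tau>_def d_def by simp
    have tau0: "\<tau> \<ge> 0" by (simp add: \<tau>_def)
    have g: "2 * \<tau> \<le> (2 * \<tau> / L) * P u" if "u \<in> boxD D" for u
    proof -
      have "2 * \<tau> = (2 * \<tau> / L) * L" using L0 by simp
      also have "\<dots> \<le> (2 * \<tau> / L) * P u" using low[OF that] L0 tau0 by (intro mult_left_mono) auto
      finally show ?thesis .
    qed
    have th: "\<theta> = \<eta> + 2 * \<tau> / L" by (simp add: \<theta>_def \<eta>_def \<tau>_def)
    have "P (v + unitv i) \<le> P v + (\<eta> * P v + (2 * \<tau> / L) * P v)" using o1 g[OF v(1)] by linarith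
    moreover have "P v \<le> P (v + unitv i) + (\<eta> * P (v + unitv i) + (2 * \<tau> / L) * P (v + unitv i))" using o2 g[OF v(2)] by linarith
    ultimately show ?thesis unfolding th by (simp add: algebra_simps)
  qed
  define m where "m = l1 (z' - z)"
  have A: "P z' \<le> (1+\<theta>)^m * P z"
    using path_bound[OF th0 Pn step, where w="z' - z" and m=m and z=z] zB unfolding m_def by simp
  have B: "P z \<le> (1+\<theta>)^m * P z'"
    using path_bound[OF th0 Pn step, where w="z - z'" and m=m and z=z'] zB l1_swap[of z z'] unfolding m_def by simp
  define x where "x = (1+\<theta>)^m"
  have x1: "x \<ge> 1" using th0 by (simp add: x_def one_le_power)
  have "P z - P z' \<le> (x - 1) * P z"
  proof -
    have "P z / x \<le> P z'" using B x1 by (simp add: x_def divide_simps mult.commute)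
    moreover have "P z - P z / x \<le> (x - 1) * P z"
    proof -
      have e: "1 - 1/x = (x-1)/x" using x1 by (simp add: field_simps)
      have "(x-1)/x \<le> (x-1)/1" using x1 by (intro divide_left_mono) auto
      then have "1 - 1/x \<le> x - 1" using e by simp
      then have "(1 - 1/x) * P z \<le> (x - 1) * P z" using Pn by (rule mult_right_mono)
      then show ?thesis by (simp add: algebra_simps)
    qed
    ultimately show ?thesis by linarith
  qed
  moreover have "P z' - P z \<le> (x - 1) * P z" using A by (simp add: x_def algebra_simps)
  ultimately have C: "\<bar>P z' - P z\<bar> \<le> (x - 1) * P z" by linarith
  have "x \<le> exp \<theta> ^ m" unfolding x_def using th0 by (intro power_mono) (auto simp: exp_ge_add_one_self add.commute)
  also have "\<dots> = exp (\<theta> * real m)" by (simp add: exp_of_nat_mult[symmetric] mult.commute)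
  finally have "(x - 1) * P z \<le> (exp (\<theta> * real m) - 1) * P z" using Pn by (intro mult_right_mono) auto
  then show ?thesis using C unfolding P_def m_def by linarith
qed



lemma phi_bound: "N > 0 \<Longrightarrow> \<bar>real_of_int ((phi N y)$j)\<bar> \<le> real N"
proof -
  assume N: "N > 0"
  define r where "r = (y$j + int (N div 2)) mod int N"
  have e: "(phi N y)$j = r - int (N div 2)" by (simp add: phi_def r_def)
  have m: "0 \<le> r" "r < int N" using N by (simp_all add: r_def)
  have h: "int (N div 2) \<le> int N" "0 \<le> int (N div 2)" by simp_all
  have "\<bar>(phi N y)$j\<bar> \<le> int N" unfolding e abs_le_iff using m h by linarith
  then have "real_of_int \<bar>(phi N y)$j\<bar> \<le> real_of_int (int N)" by (simp only: of_int_le_iff)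
  then show ?thesis by simp
qed

lemma torus_bound: "b \<in> torus N \<Longrightarrow> \<bar>real_of_int (b$j)\<bar> \<le> real N"
proof -
  assume "b \<in> torus N"
  then have h: "- real N / 2 \<le> real_of_int (b$j)" "real_of_int (b$j) < real N / 2" by (auto simp: torus_def)
  have n0: "real N \<ge> 0" by simp
  show ?thesis unfolding abs_le_iff using h n0 by linarith
qed

lemma comp_le_znorm: "\<bar>real_of_int (v$j)\<bar> \<le> znorm v"
proof -
  have "\<bar>(rv v)$j\<bar> \<le> norm (rv v)" by (rule component_le_norm_cart)
  then show ?thesis by (simp add: znorm_def rv_def)
qed

lemma theta_mono:
  fixes D t0 t s d :: real and K :: nat
  assumes d: "d = real K" "K \<ge> 1" and D0: "0 \<le> D" and t: "0 < t0" "t0 \<le> t" "t \<le> s"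
  shows "8 * d * (D+1) / t + 2 * exp (-(1 - ln 2) * t / (2 * d)) / (exp (-4*D*(D+1)/(t / (2 * d) ^ K)) / (4 * t)) ^ K
     \<le> 8 * d * (D+1) / t0 + 2 * exp (-(1 - ln 2) * t0 / (2 * d)) * (4 * s) ^ K * exp (4 * d * (2*d)^K * D * (D+1) / t0)"
proof -
  have d1: "d \<ge> 1" using d by simp
  have tp: "t > 0" using t by linarith
  have a: "8 * d * (D+1) / t \<le> 8 * d * (D+1) / t0" using t d1 D0 by (intro divide_left_mono) auto
  have inv: "1 / (exp (-4*D*(D+1)/(t / (2 * d) ^ K)) / (4 * t)) ^ K = (4 * t) ^ K * exp (4 * d * (2*d)^K * D * (D+1) / t)"
  proof -
    define X where "X = 4*D*(D+1)/(t / (2 * d) ^ K)"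
    have e: "exp (- X) / (4 * t) = 1 / ((4 * t) * exp X)" using tp by (simp add: exp_minus field_simps)
    have "-4*D*(D+1)/(t / (2 * d) ^ K) = - X" by (simp add: X_def)
    then have "1 / (exp (-4*D*(D+1)/(t / (2 * d) ^ K)) / (4 * t)) ^ K = 1 / (1 / ((4 * t) * exp X)) ^ K"
      using e by simp
    also have "\<dots> = ((4 * t) * exp X) ^ K" by (simp add: power_one_over)
    finally have "1 / (exp (-4*D*(D+1)/(t / (2 * d) ^ K)) / (4 * t)) ^ K = ((4 * t) * exp (4*D*(D+1)/(t / (2 * d) ^ K))) ^ K"
      by (simp add: X_def)
    also have "\<dots> = (4 * t) ^ K * exp (4*D*(D+1)/(t / (2 * d) ^ K)) ^ K" by (simp add: power_mult_distrib)
    also have "exp (4*D*(D+1)/(t / (2 * d) ^ K)) ^ K = exp (real K * (4*D*(D+1)/(t / (2 * d) ^ K)))"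
      by (rule exp_of_nat_mult[symmetric])
    also have "real K * (4*D*(D+1)/(t / (2 * d) ^ K)) = 4 * d * (2*d)^K * D * (D+1) / t"
      using tp d1 d by (simp add: field_simps)
    finally show ?thesis .
  qed
  have b1: "exp (-(1 - ln 2) * t / (2 * d)) \<le> exp (-(1 - ln 2) * t0 / (2 * d))"
  proof -
    have "(1 - ln 2) * t0 \<le> (1 - ln 2) * t" using t ln_2_less_1 by (intro mult_left_mono) auto
    then have h: "(1 - ln 2) * t0 / (2 * d) \<le> (1 - ln 2) * t / (2 * d)" using d1 by (intro divide_right_mono) auto
    have e1: "-(1 - ln 2) * t / (2*d) = -((1 - ln 2) * t / (2*d))" by (simp only: minus_mult_left minus_divide_left)
    have e2: "-(1 - ln 2) * t0 / (2*d) = -((1 - ln 2) * t0 / (2*d))" by (simp only: minus_mult_left minus_divide_left)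
    have "-(1 - ln 2) * t / (2*d) \<le> -(1 - ln 2) * t0 / (2*d)" unfolding e1 e2 using h by linarith
    then show ?thesis by simp
  qed
  have b2: "(4 * t) ^ K \<le> (4 * s) ^ K" using t tp by (intro power_mono) auto
  have b3: "exp (4 * d * (2*d)^K * D * (D+1) / t) \<le> exp (4 * d * (2*d)^K * D * (D+1) / t0)"
  proof -
    have "0 \<le> 4 * d * (2*d)^K * D * (D+1)" using d1 D0 by simp
    then have "4 * d * (2*d)^K * D * (D+1) / t \<le> 4 * d * (2*d)^K * D * (D+1) / t0"
      using t by (intro divide_left_mono) auto
    then show ?thesis by simp
  qed
  have "2 * exp (-(1 - ln 2) * t / (2 * d)) / (exp (-4*D*(D+1)/(t / (2 * d) ^ K)) / (4 * t)) ^ K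
      = 2 * exp (-(1 - ln 2) * t / (2 * d)) * ((4 * t) ^ K * exp (4 * d * (2*d)^K * D * (D+1) / t))"
  proof -
    have "2 * exp (-(1 - ln 2) * t / (2 * d)) / (exp (-4*D*(D+1)/(t / (2 * d) ^ K)) / (4 * t)) ^ K
       = 2 * exp (-(1 - ln 2) * t / (2 * d)) * (1 / (exp (-4*D*(D+1)/(t / (2 * d) ^ K)) / (4 * t)) ^ K)"
      by (simp only: times_divide_eq_right mult_1_right)
    then show ?thesis by (simp only: inv)
  qed
  also have "\<dots> \<le> 2 * exp (-(1 - ln 2) * t0 / (2 * d)) * ((4 * s) ^ K * exp (4 * d * (2*d)^K * D * (D+1) / t0))"
    using b1 b2 b3 tp t by (intro mult_left_mono mult_mono) auto
  finally show ?thesis using a by (simp add: ac_simps)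
qed



definition DnF :: "real \<Rightarrow> real \<Rightarrow> real" where
  "DnF bt s = (2 * s) powr bt + 100 * (ln (ln s))^2 * sqrt s"

definition t0F :: "real \<Rightarrow> real" where
  "t0F s = s / (10 * ln (ln s))"

definition ThF :: "real \<Rightarrow> real \<Rightarrow> nat \<Rightarrow> real \<Rightarrow> real" where
  "ThF bt d K s = 8 * d * (DnF bt s + 1) / t0F s + 2 * exp (-(1 - ln 2) * t0F s / (2 * d)) * (4 * s) ^ K
     * exp (4 * d * (2*d)^K * DnF bt s * (DnF bt s + 1) / t0F s)"

lemma asymp_facts:
  fixes bt d \<epsilon> :: real and K :: nat
  assumes b: "0 < bt" "bt < 1/2" and d: "d = real K" "K \<ge> 1" and e: "\<epsilon> > 0"
  shows "eventually (\<lambda>s. 1 \<le> s \<and> 0 < ln (ln s) \<and> 4*d*(2*d)^K*(DnF bt s + 1) \<le> t0F s \<and>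
      exp (-(1 - ln 2) * t0F s / (2*d)^K) \<le> 1/4 \<and> (2 * s) powr bt * (2*d) * ThF bt d K s \<le> ln (1+\<epsilon>)) at_top"
proof -
  have d1: "d \<ge> 1" using d by simp
  define c where "c = (1 - ln (2::real))"
  have c0: "c > 0" using ln_2_less_1 by (simp add: c_def)
  define M where "M = (2*d)^K"
  have M0: "M > 0" using d1 by (simp add: M_def)
  define Q where "Q = 4*d*M"
  have Q0: "Q > 0" using d1 M0 by (simp add: Q_def)
  have ev0: "eventually (\<lambda>s::real. 0 < ln (ln s)) at_top" by real_asymp
  have ev1: "eventually (\<lambda>s::real. 1 \<le> s \<and> 0 < ln (ln s)) at_top"
    using eventually_conj[OF eventually_ge_at_top[of 1] ev0] by simp
  have L3: "((\<lambda>s::real. ((2 * s) powr bt + 100*(ln (ln s))^2 * sqrt s + 1) / (s / (10 * ln (ln s)))) \<longlongrightarrow> 0) at_top"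
    using b by real_asymp
  have ev2: "eventually (\<lambda>s. (DnF bt s + 1) / t0F s < 1 / Q) at_top"
    using order_tendstoD(2)[OF L3, of "1/Q"] Q0 by (simp add: DnF_def t0F_def)
  have L5: "((\<lambda>s::real. exp (- c * (s / (10 * ln (ln s))) / M)) \<longlongrightarrow> 0) at_top"
    using c0 M0 by real_asymp
  have ev3: "eventually (\<lambda>s. exp (-(1 - ln 2) * t0F s / (2*d)^K) < 1/4) at_top"
    using order_tendstoD(2)[OF L5, of "1/4"] by (simp add: t0F_def c_def M_def)
  define C where "C = 4 * d * M"
  have C0: "C > 0" using Q0 by (simp add: C_def Q_def)
  define c' where "c' = c / (2*d)"
  have c'0: "c' > 0" using c0 d1 by (simp add: c'_def)
  have dd: "real K > 0" using d by simp
  have L1: "((\<lambda>s::real. (2 * s) powr bt * (8*d*((2 * s) powr bt + 100*(ln (ln s))^2 * sqrt s + 1) / (s / (10 * ln (ln s))))) \<longlongrightarrow> 0) at_top"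
    using b d1 by real_asymp
  have L2: "((\<lambda>s::real. (2 * s) powr bt * (2 * exp (- c' * (s / (10 * ln (ln s)))) * (4 * s) powr (real K) *
     exp (C * ((2 * s) powr bt + 100*(ln (ln s))^2 * sqrt s) * ((2 * s) powr bt + 100*(ln (ln s))^2 * sqrt s + 1) / (s / (10 * ln (ln s)))))) \<longlongrightarrow> 0) at_top"
    using b dd c'0 C0 by real_asymp
  have L12: "((\<lambda>s::real. (2 * s) powr bt * (8*d*((2 * s) powr bt + 100*(ln (ln s))^2 * sqrt s + 1) / (s / (10 * ln (ln s))))
     + (2 * s) powr bt * (2 * exp (- c' * (s / (10 * ln (ln s)))) * (4 * s) powr (real K) *
     exp (C * ((2 * s) powr bt + 100*(ln (ln s))^2 * sqrt s) * ((2 * s) powr bt + 100*(ln (ln s))^2 * sqrt s + 1) / (s / (10 * ln (ln s)))))) \<longlongrightarrow> 0) at_top"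
    using tendsto_add[OF L1 L2] by simp
  have lp: "ln (1+\<epsilon>) / (2*d) > 0" using e d1 by simp
  have ev4: "eventually (\<lambda>s::real. (2 * s) powr bt * (8*d*((2 * s) powr bt + 100*(ln (ln s))^2 * sqrt s + 1) / (s / (10 * ln (ln s))))
     + (2 * s) powr bt * (2 * exp (- c' * (s / (10 * ln (ln s)))) * (4 * s) powr (real K) *
     exp (C * ((2 * s) powr bt + 100*(ln (ln s))^2 * sqrt s) * ((2 * s) powr bt + 100*(ln (ln s))^2 * sqrt s + 1) / (s / (10 * ln (ln s))))) < ln (1+\<epsilon>) / (2*d)) at_top"
    by (rule order_tendstoD(2)[OF L12 lp])
  show ?thesis
    using ev1 ev2 ev3 ev4
  proof eventually_elim
    case (elim s)
    have s1: "1 \<le> s" and l0: "0 < ln (ln s)" using elim by auto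
    have t0p: "t0F s > 0" using s1 l0 by (simp add: t0F_def)
    have "(DnF bt s + 1) < t0F s / Q" using elim(2) t0p by (simp add: field_simps)
    then have A: "4*d*(2*d)^K*(DnF bt s + 1) \<le> t0F s" using Q0 by (simp add: Q_def M_def field_simps)
    have sp: "s > 0" using s1 by simp
    have pw: "(4 * s) powr (real K) = (4 * s)^K" using sp by (simp add: powr_realpow)
    have ex: "exp (- c' * (s / (10 * ln (ln s)))) = exp (-(1 - ln 2) * t0F s / (2 * d))"
      using d1 l0 by (simp add: c'_def c_def t0F_def field_simps)
    have "(2 * s) powr bt * ThF bt d K s < ln (1+\<epsilon>) / (2*d)"
      using elim(4) unfolding ThF_def pw ex
      by (simp add: DnF_def t0F_def C_def M_def distrib_left ac_simps)
    then have B: "(2 * s) powr bt * (2*d) * ThF bt d K s \<le> ln (1+\<epsilon>)" using d1 by (simp add: field_simps)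
    show ?case using s1 l0 A elim(3) B by simp
  qed
qed



lemma nN_lower: "1 < \<delta> \<Longrightarrow> N \<ge> 1 \<Longrightarrow> real (nN \<delta> N) \<ge> real N - 1"
proof -
  assume d: "1 < \<delta>" and N: "N \<ge> 1"
  have N1: "real N \<ge> 1" using N by simp
  have "real N powr 1 \<le> real N powr \<delta>" using d N1 by (intro powr_mono) auto
  then have x: "real N \<le> real N powr \<delta>" using N1 by simp
  have f: "real_of_int \<lfloor>real N powr \<delta>\<rfloor> > real N powr \<delta> - 1" by linarith
  have f0: "\<lfloor>real N powr \<delta>\<rfloor> \<ge> 0" by simp
  have "real (nN \<delta> N) = real_of_int \<lfloor>real N powr \<delta>\<rfloor>" using f0 by (simp add: nN_def)
  then show ?thesis using f x by linarith
qed

lemma nN_tendsto: "1 < \<delta> \<Longrightarrow> filterlim (\<lambda>N. real (nN \<delta> N)) at_top sequentially"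
proof -
  assume d: "1 < \<delta>"
  have "filterlim (\<lambda>N::nat. real N - 1) at_top sequentially" by real_asymp
  moreover have "eventually (\<lambda>N. real N - 1 \<le> real (nN \<delta> N)) sequentially"
    using eventually_ge_at_top[of "1::nat"] by eventually_elim (use nN_lower[OF d] in auto)
  ultimately show ?thesis by (rule filterlim_at_top_mono)
qed

lemma N_upper: "0 < \<delta> \<Longrightarrow> nN \<delta> N \<ge> 1 \<Longrightarrow> real N \<le> (2 * real (nN \<delta> N)) powr (1/\<delta>)"
proof -
  assume d: "0 < \<delta>" and n1: "nN \<delta> N \<ge> 1"
  have f: "real N powr \<delta> < real_of_int \<lfloor>real N powr \<delta>\<rfloor> + 1" by linarith
  have f0: "\<lfloor>real N powr \<delta>\<rfloor> \<ge> 0" by simp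
  have e: "real (nN \<delta> N) = real_of_int \<lfloor>real N powr \<delta>\<rfloor>" using f0 by (simp add: nN_def)
  have r1: "real (nN \<delta> N) \<ge> 1" using n1 by simp
  have "real N powr \<delta> \<le> 2 * real (nN \<delta> N)" using f e r1 by linarith
  then have "(real N powr \<delta>) powr (1/\<delta>) \<le> (2 * real (nN \<delta> N)) powr (1/\<delta>)"
    using d by (intro powr_mono2) auto
  moreover have "(real N powr \<delta>) powr (1/\<delta>) = real N" using d by (simp add: powr_powr)
  ultimately show ?thesis by simp
qed



theorem mainTheorem12:
  fixes m :: "nat \<Rightarrow> nat" and g :: "nat \<Rightarrow> real" and K :: "(int^'d) set"
    and A \<delta> \<zeta> C1 R :: real
  assumes d3: "CARD('d) \<ge> 3"
    and delta: "2 < \<delta>" "\<delta> < real CARD('d)"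
      "2 * \<delta> > (real CARD('d))^2 / (real CARD('d) - 1)"
    and zeta: "0 < \<zeta>" "\<zeta> < \<delta> / real CARD('d)"
      "\<zeta> * (real CARD('d) - 2) > real CARD('d) - \<delta>"
    and C1: "C1 > 0"
    and A: "A > 0" "(\<lambda>N. (real (m N * N))^2 / real N ^ CARD('d)) \<longlonglongrightarrow> A"
    and g: "filterlim g at_top sequentially"
    and K: "K \<subseteq> zball 0 R"
  shows "\<forall>\<epsilon>>0. \<exists>N0. \<forall>N\<ge>N0. \<forall>xx x0 \<tau> ys l x n3 x' u'.
      xx \<in> torus N \<and>
      tshift N xx ` phi N ` zball 0 R \<inter> phi N ` zball 0 (g N) = {} \<and>
      x0 \<in> tshift N xx ` phi N ` K \<and>
      (\<tau>, ys) \<in> goodG N (m N * N) \<delta> \<zeta> C1 x0 \<and>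
      2 \<le> l \<and> l \<le> \<tau> \<and>
      znorm (ys l - ys (l - 1)) \<le> An (nN \<delta> N) * sqrt (real (nN \<delta> N)) \<and>
      x \<in> Gl N (nN \<delta> N) ys l \<and>
      epsn (nN \<delta> N) * real (nN \<delta> N) \<le> real n3 \<and> n3 \<le> nN \<delta> N \<and>
      x' \<in> shiftset (tshift N xx ` phi N ` K) x N \<and>
      u' \<in> shiftset (torus N) x N
      \<longrightarrow> \<bar>lazy_p n3 x' (ys l) - lazy_p n3 u' (ys l)\<bar> \<le> \<epsilon> * lazy_p n3 u' (ys l)"
proof (intro allI impI)
  fix \<epsilon> :: real assume e: "\<epsilon> > 0"
  define KK where "KK = CARD('d)"
  define d where "d = real KK"
  define bt where "bt = 1 / \<delta>"
  have KK1: "KK \<ge> 1" using d3 by (simp add: KK_def)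
  have d1: "d \<ge> 1" using KK1 by (simp add: d_def)
  have bt: "0 < bt" "bt < 1/2" using delta by (simp_all add: bt_def field_simps)
  define P where "P = (\<lambda>s. 1 \<le> s \<and> 0 < ln (ln s) \<and> 4*d*(2*d)^KK*(DnF bt s + 1) \<le> t0F s \<and>
      exp (-(1 - ln 2) * t0F s / (2*d)^KK) \<le> 1/4 \<and> (2 * s) powr bt * (2*d) * ThF bt d KK s \<le> ln (1+\<epsilon>))"
  have evs: "eventually P at_top" unfolding P_def by (rule asymp_facts[OF bt d_def KK1 e])
  have evN: "eventually (\<lambda>N. P (real (nN \<delta> N))) sequentially"
    using nN_tendsto[of \<delta>] delta(1) evs by (auto simp: filterlim_iff)
  obtain N0 where N0: "\<And>N. N \<ge> N0 \<Longrightarrow> P (real (nN \<delta> N)) \<and> N \<ge> 1"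
    using eventually_conj[OF evN eventually_ge_at_top[of "1::nat"]] unfolding eventually_sequentially by blast
  show "\<exists>N0. \<forall>N\<ge>N0. \<forall>xx x0 \<tau> ys l x n3 x' u'.
      xx \<in> torus N \<and>
      tshift N xx ` phi N ` zball 0 R \<inter> phi N ` zball 0 (g N) = {} \<and>
      x0 \<in> tshift N xx ` phi N ` K \<and>
      (\<tau>, ys) \<in> goodG N (m N * N) \<delta> \<zeta> C1 x0 \<and>
      2 \<le> l \<and> l \<le> \<tau> \<and>
      znorm (ys l - ys (l - 1)) \<le> An (nN \<delta> N) * sqrt (real (nN \<delta> N)) \<and>
      x \<in> Gl N (nN \<delta> N) ys l \<and>
      epsn (nN \<delta> N) * real (nN \<delta> N) \<le> real n3 \<and> n3 \<le> nN \<delta> N \<and>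
      x' \<in> shiftset (tshift N xx ` phi N ` K) x N \<and>
      u' \<in> shiftset (torus N) x N
      \<longrightarrow> \<bar>lazy_p n3 x' (ys l) - lazy_p n3 u' (ys l)\<bar> \<le> \<epsilon> * lazy_p n3 u' (ys l)"
  proof (intro exI allI impI)
    fix N xx x0 \<tau> ys l x n3 x' u'
    assume NN: "N0 \<le> N"
    assume H: "xx \<in> torus N \<and>
      tshift N xx ` phi N ` zball 0 R \<inter> phi N ` zball 0 (g N) = {} \<and>
      x0 \<in> tshift N xx ` phi N ` K \<and>
      (\<tau>, ys) \<in> goodG N (m N * N) \<delta> \<zeta> C1 x0 \<and>
      2 \<le> l \<and> l \<le> \<tau> \<and>
      znorm (ys l - ys (l - 1)) \<le> An (nN \<delta> N) * sqrt (real (nN \<delta> N)) \<and>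
      x \<in> Gl N (nN \<delta> N) ys l \<and>
      epsn (nN \<delta> N) * real (nN \<delta> N) \<le> real n3 \<and> n3 \<le> nN \<delta> N \<and>
      x' \<in> shiftset (tshift N xx ` phi N ` K) x N \<and>
      u' \<in> shiftset (torus N) x N"
    define n where "n = nN \<delta> N"
    define s where "s = real n"
    have Ps: "P s" and N1: "N \<ge> 1" using N0[OF NN] by (auto simp: s_def n_def)
    have s1: "1 \<le> s" and l0: "0 < ln (ln s)" and cA: "4*d*(2*d)^KK*(DnF bt s + 1) \<le> t0F s"
      and cE: "exp (-(1 - ln 2) * t0F s / (2*d)^KK) \<le> 1/4"
      and cT: "(2 * s) powr bt * (2*d) * ThF bt d KK s \<le> ln (1+\<epsilon>)" using Ps by (auto simp: P_def)
    have n1: "n \<ge> 1" using s1 by (simp add: s_def)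
    have Nup: "real N \<le> (2 * s) powr bt" using N_upper[of \<delta> N] delta(1) n1 by (simp add: s_def n_def bt_def)
    obtain p where p: "p \<in> tshift N xx ` phi N ` K" and x'e: "x' = p + int N *s x"
      using H by (auto simp: shiftset_def)
    obtain b where b: "b \<in> torus N" and u'e: "u' = b + int N *s x"
      using H by (auto simp: shiftset_def)
    have pb: "\<And>j. \<bar>real_of_int (p$j)\<bar> \<le> real N"
      using p N1 by (auto simp: tshift_def intro!: phi_bound)
    have bb': "\<And>j. \<bar>real_of_int (b$j)\<bar> \<le> real N" using b by (rule torus_bound)
    define y where "y = ys l"
    have Gx: "znorm (int N *s x - y) \<le> (An n)^2 * sqrt (real n)" using H by (simp add: Gl_def y_def n_def)
    have An2: "(An n)^2 = 100 * (ln (ln s))^2" by (simp add: An_def s_def power_mult_distrib)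
    define D where "D = DnF bt s"
    have Dx: "real N + znorm (int N *s x - y) \<le> D"
      using Nup Gx An2 by (simp add: D_def DnF_def s_def)
    define z' where "z' = x' - y"
    define z where "z = u' - y"
    have z'B: "z' \<in> boxD D"
      unfolding boxD_def mem_Collect_eq
    proof
      fix j
      have "z'$j = p$j + (int N *s x - y)$j" by (simp add: z'_def x'e)
      then have "\<bar>real_of_int (z'$j)\<bar> \<le> \<bar>real_of_int (p$j)\<bar> + \<bar>real_of_int ((int N *s x - y)$j)\<bar>" by simp
      also have "\<dots> \<le> real N + znorm (int N *s x - y)" using pb[of j] comp_le_znorm[of "int N *s x - y" j] by linarith
      finally show "\<bar>real_of_int (z'$j)\<bar> \<le> D" using Dx by linarith
    qed
    have zB: "z \<in> boxD D"
      unfolding boxD_def mem_Collect_eq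
    proof
      fix j
      have "z$j = b$j + (int N *s x - y)$j" by (simp add: z_def u'e)
      then have "\<bar>real_of_int (z$j)\<bar> \<le> \<bar>real_of_int (b$j)\<bar> + \<bar>real_of_int ((int N *s x - y)$j)\<bar>" by simp
      also have "\<dots> \<le> real N + znorm (int N *s x - y)" using bb'[of j] comp_le_znorm[of "int N *s x - y" j] by linarith
      finally show "\<bar>real_of_int (z$j)\<bar> \<le> D" using Dx by linarith
    qed
    have D0: "0 \<le> D" using Dx znorm_def by (smt (verit) norm_ge_zero of_nat_0_le_iff)
    have l1b: "real (l1 (z' - z)) \<le> 2 * d * real N"
    proof -
      have w: "z' - z = p - b" by (simp add: z'_def z_def x'e u'e)
      have "\<And>j. nat \<bar>(p - b)$j\<bar> \<le> 2 * N"
      proof -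
        fix j
        have "\<bar>real_of_int ((p - b)$j)\<bar> \<le> 2 * real N" using pb[of j] bb'[of j] by simp
        then have "real_of_int \<bar>(p - b)$j\<bar> \<le> real_of_int (int (2 * N))" by simp
        then have "\<bar>(p - b)$j\<bar> \<le> int (2 * N)" by (simp only: of_int_le_iff)
        then show "nat \<bar>(p - b)$j\<bar> \<le> 2 * N" by simp
      qed
      then have "l1 (p - b) \<le> (\<Sum>j\<in>(UNIV::'d set). 2 * N)" unfolding l1_def by (intro sum_mono) auto
      also have "\<dots> = KK * (2 * N)" by (simp add: KK_def)
      finally have "real (l1 (p - b)) \<le> real (KK * (2 * N))" by (simp only: of_nat_le_iff)
      then show ?thesis using w by (simp add: d_def)
    qed
    have t0F_eq: "epsn n * real n = t0F s" by (simp add: epsn_def t0F_def s_def)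
    have tlow: "t0F s \<le> real n3" using H t0F_eq by (simp add: n_def)
    have tup: "real n3 \<le> s" using H by (simp add: s_def n_def)
    have t0p: "t0F s > 0" using s1 l0 by (simp add: t0F_def)
    have M1: "(2*d)^KK \<ge> 1" using d1 by (intro one_le_power) auto
    have D1: "D + 1 > 0" using D0 by simp
    have tD: "4 * d * (D+1) \<le> real n3"
    proof -
      have "4 * d * (D+1) * 1 \<le> 4 * d * (D+1) * (2*d)^KK" using M1 d1 D1 by (intro mult_left_mono) auto
      moreover have "4 * d * (D+1) * (2*d)^KK = 4*d*(2*d)^KK*(D+1)" by (simp only: ac_simps)
      ultimately show ?thesis using cA[folded D_def] tlow by linarith
    qed
    have TD: "2*(D+1) \<le> real n3 / (2 * d) ^ KK"
    proof -
      have "2 * (D+1) \<le> 4 * d * (D+1)" using d1 D1 by (intro mult_right_mono) auto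
      
      moreover have "(0::real) \<le> (2*d)^KK" using M1 by linarith
      ultimately have "2 * (D+1) * (2*d)^KK \<le> 4 * d * (D+1) * (2*d)^KK" by (rule mult_right_mono)
      moreover have "4 * d * (D+1) * (2*d)^KK = 4 * d * (2*d)^KK * (D+1)" by (simp only: ac_simps)
      ultimately have "2 * (D+1) * (2*d)^KK \<le> 4 * d * (2*d)^KK * (D+1)" by (rule ord_le_eq_trans)
      then have "2 * (D+1) * (2*d)^KK \<le> real n3" using cA[folded D_def] tlow by linarith
      then show ?thesis using M1 by (simp add: field_simps)
    qed
    have Te: "exp (-(1 - ln 2) * (real n3 / (2 * d) ^ KK)) \<le> 1/4"
    proof -
      have "(1 - ln 2) * t0F s \<le> (1 - ln 2) * real n3" using tlow ln_2_less_1 by (intro mult_left_mono) auto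
      then have "(1 - ln 2) * t0F s / (2*d)^KK \<le> (1 - ln 2) * real n3 / (2*d)^KK" using M1 by (intro divide_right_mono) auto
      then have h: "(1 - ln 2) * t0F s / (2*d)^KK \<le> (1 - ln 2) * real n3 / (2*d)^KK" .
      have e1: "-(1 - ln 2) * (real n3 / (2 * d) ^ KK) = -((1 - ln 2) * real n3 / (2*d)^KK)"
        by (simp only: minus_mult_left times_divide_eq_right)
      have e2: "-(1 - ln 2) * t0F s / (2*d)^KK = -((1 - ln 2) * t0F s / (2*d)^KK)"
        by (simp only: minus_mult_left minus_divide_left)
      have "-(1 - ln 2) * (real n3 / (2 * d) ^ KK) \<le> -(1 - ln 2) * t0F s / (2*d)^KK"
        unfolding e1 e2 using h by linarith
      then have "exp (-(1 - ln 2) * (real n3 / (2 * d) ^ KK)) \<le> exp (-(1 - ln 2) * t0F s / (2*d)^KK)" by simp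
      then show ?thesis using cE by linarith
    qed
    define \<theta> where "\<theta> = 8 * d * (D+1) / real n3 + 2 * exp (-(1 - ln 2) * real n3 / (2 * d)) / (exp (-4*D*(D+1)/(real n3 / (2 * d) ^ KK)) / (4 * real n3)) ^ KK"
    have comb: "\<bar>PW UNIV n3 z' - PW UNIV n3 z\<bar> \<le> (exp (\<theta> * real (l1 (z' - z))) - 1) * PW UNIV n3 z"
      using combined[OF D0 zB z'B, of n3] tD TD Te unfolding \<theta>_def d_def KK_def by simp
    have thle: "\<theta> \<le> ThF bt d KK s"
      using theta_mono[OF d_def KK1 D0 t0p tlow tup] unfolding \<theta>_def ThF_def D_def by simp
    have n3p: "real n3 > 0" using t0p tlow by linarith
    have th0: "\<theta> \<ge> 0" unfolding \<theta>_def using n3p d1 D0 by (intro add_nonneg_nonneg) auto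
    have "\<theta> * real (l1 (z' - z)) \<le> ThF bt d KK s * (2 * d * real N)"
      using thle l1b th0 by (intro mult_mono) auto
    also have "\<dots> \<le> ThF bt d KK s * (2 * d * (2 * s) powr bt)"
      using Nup d1 thle th0 by (intro mult_left_mono) auto
    also have "\<dots> = (2 * s) powr bt * (2*d) * ThF bt d KK s" by (simp add: ac_simps)
    also have "\<dots> \<le> ln (1+\<epsilon>)" by (rule cT)
    finally have X: "\<theta> * real (l1 (z' - z)) \<le> ln (1+\<epsilon>)" .
    have "exp (\<theta> * real (l1 (z' - z))) \<le> exp (ln (1+\<epsilon>))" using X by (simp only: exp_le_cancel_iff)
    also have "exp (ln (1+\<epsilon>)) = 1 + \<epsilon>" using e by simp
    finally have "exp (\<theta> * real (l1 (z' - z))) \<le> 1 + \<epsilon>" .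
    then have "(exp (\<theta> * real (l1 (z' - z))) - 1) * PW UNIV n3 z \<le> \<epsilon> * PW UNIV n3 z"
      using PW_nonneg by (intro mult_right_mono) auto
    then have "\<bar>PW UNIV n3 z' - PW UNIV n3 z\<bar> \<le> \<epsilon> * PW UNIV n3 z" using comb by linarith
    then show "\<bar>lazy_p n3 x' (ys l) - lazy_p n3 u' (ys l)\<bar> \<le> \<epsilon> * lazy_p n3 u' (ys l)"
      by (simp add: lazy_PW z'_def z_def y_def)
  qed
qed


end
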